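(* With the notation of the context, for every $\Gamma>0$ and all fixed frequencies, $$|B_\Gamma\cap S|\lesssim N_{\min}N_{\rm med};\qquad |B_\Gamma\cap S_k|,\ |B_\Gamma\cap S_{k_i}|\lesssim N_{\rm med}\ (i=1,2,3);\qquad |B_\Gamma\cap S_{kk_2}|,\ |B_\Gamma\cap S_{k_1k_3}|\lesssim N_{\rm med}.$$
   Context: Fix $\alpha\in(1,2)$, dyadic numbers $1\le N_1,N_2,N_3\le N$, a real number $m$ and a constant $C_0>0$. Let $S$ be the set of $(k,k_1,k_2,k_3)\in\mathbb Z^4$ with $k=k_1-k_2+k_3$, $k_2\notin\{k_1,k_3\}$, $\big||k_1|^\alpha-|k_2|^\alpha+|k_3|^\alpha-|k|^\alpha-m\big|\le C_0$, $|k|\le N$ and $|k_j|\le N_j$ for $j=1,2,3$. When some variables are fixed, $S$ with those variables as subscripts denotes the set of remaining variables for which the quadruple lies in $S$ (e.g. $S_{kk_2}=\{(k_1,k_3):(k,k_1,k_2,k_3)\in S\}$); intersections $B_\Gamma\cap S_{\cdots}$ are understood in the same sliced sense. $N_{\max}\ge N_{\rm med}\ge N_{\min}$ denote the decreasing rearrangement of $N_1,N_2,N_3$; fix an index $j_*$ with $N_{j_*}=N_{\max}$ and write $k_{\max}=k_{j_*}$. For $\Gamma>0$, $B_\Gamma=\{(k,k_1,k_2,k_3)\in S:|k_{\max}|\le\Gamma<|k|\}$. $|A|$ is cardinality. $A\lesssim B$ means $A\le CB$ with $C$ depending only on $\alpha$ and $C_0$. *)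

theory Defs
  imports Complex_Main
begin

definition dyadic :: "nat \<Rightarrow> bool" where
  "dyadic n \<longleftrightarrow> (\<exists>j::nat. n = 2 ^ j)"

definition nmax3 :: "nat \<Rightarrow> nat \<Rightarrow> nat \<Rightarrow> nat" where
  "nmax3 a b c = max a (max b c)"
definition nmin3 :: "nat \<Rightarrow> nat \<Rightarrow> nat \<Rightarrow> nat" where
  "nmin3 a b c = min a (min b c)"
definition nmed3 :: "nat \<Rightarrow> nat \<Rightarrow> nat \<Rightarrow> nat" where
  "nmed3 a b c = a + b + c - nmax3 a b c - nmin3 a b c"

definition sel3 :: "nat \<Rightarrow> 'a \<Rightarrow> 'a \<Rightarrow> 'a \<Rightarrow> 'a" where
  "sel3 j x1 x2 x3 = (if j = 1 then x1 else if j = 2 then x2 else x3)"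

definition Sset :: "real \<Rightarrow> real \<Rightarrow> real \<Rightarrow> nat \<Rightarrow> nat \<Rightarrow> nat \<Rightarrow> nat
    \<Rightarrow> (int \<times> int \<times> int \<times> int) set" where
  "Sset \<alpha> C0 m N N1 N2 N3 = {(k, k1, k2, k3).
     k = k1 - k2 + k3 \<and> k2 \<noteq> k1 \<and> k2 \<noteq> k3 \<and>
     \<bar>\<bar>real_of_int k1\<bar> powr \<alpha> - \<bar>real_of_int k2\<bar> powr \<alpha> + \<bar>real_of_int k3\<bar> powr \<alpha>
        - \<bar>real_of_int k\<bar> powr \<alpha> - m\<bar> \<le> C0 \<and>
     \<bar>k\<bar> \<le> int N \<and> \<bar>k1\<bar> \<le> int N1 \<and> \<bar>k2\<bar> \<le> int N2 \<and> \<bar>k3\<bar> \<le> int N3}"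

text \<open>B_Gamma, with k_max = k_j for the chosen index j.\<close>
definition Bset :: "real \<Rightarrow> real \<Rightarrow> real \<Rightarrow> nat \<Rightarrow> nat \<Rightarrow> nat \<Rightarrow> nat \<Rightarrow> nat \<Rightarrow> real
    \<Rightarrow> (int \<times> int \<times> int \<times> int) set" where
  "Bset \<alpha> C0 m N N1 N2 N3 j \<Gamma> = {(k, k1, k2, k3) \<in> Sset \<alpha> C0 m N N1 N2 N3.
     real_of_int \<bar>sel3 j k1 k2 k3\<bar> \<le> \<Gamma> \<and> \<Gamma> < real_of_int \<bar>k\<bar>}"

end

theory Submission
  imports Defs "HOL-Analysis.Convex"
begin


definition PP :: "real \<Rightarrow> int \<Rightarrow> real" where
  "PP \<alpha> t = \<bar>real_of_int t\<bar> powr \<alpha>"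

lemma PP_neg [simp]: "PP \<alpha> (- t) = PP \<alpha> t"
  by (simp add: PP_def)

lemma powr_tangent_convex:
  fixes \<alpha> u v :: real
  assumes "1 \<le> \<alpha>" "0 < u" "0 < v"
  shows "\<alpha> * v powr (\<alpha> - 1) * (u - v) \<le> u powr \<alpha> - v powr \<alpha>"
proof -
  have "(\<lambda>x. \<alpha> * x powr (\<alpha> - 1)) v * (u - v) \<le> (\<lambda>x. x powr \<alpha>) u - (\<lambda>x. x powr \<alpha>) v"
  proof (rule f''_imp_f'[where C="{0<..}" and f''="\<lambda>x. \<alpha> * ((\<alpha> - 1) * x powr (\<alpha> - 1 - 1))"])
    show "convex {0::real<..}" by simp
    show "DERIV (\<lambda>x. x powr \<alpha>) x :> \<alpha> * x powr (\<alpha> - 1)" if "x \<in> {0<..}" for x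
      using that by (auto intro: has_real_derivative_powr)
    show "DERIV (\<lambda>x. \<alpha> * x powr (\<alpha> - 1)) x :> \<alpha> * ((\<alpha> - 1) * x powr (\<alpha> - 1 - 1))" if "x \<in> {0<..}" for x
      using that by (auto intro!: derivative_eq_intros has_real_derivative_powr)
    show "0 \<le> \<alpha> * ((\<alpha> - 1) * x powr (\<alpha> - 1 - 1))" if "x \<in> {0<..}" for x
      using assms by simp
  qed (use assms in auto)
  then show ?thesis by simp
qed

lemma powr_tangent_concave:
  fixes \<beta> u v :: real
  assumes "0 \<le> \<beta>" "\<beta> \<le> 1" "0 < u" "0 < v"
  shows "u powr \<beta> \<le> v powr \<beta> + \<beta> * v powr (\<beta> - 1) * (u - v)"
proof -
  have "(\<lambda>x. - \<beta> * x powr (\<beta> - 1)) v * (u - v) \<le> (\<lambda>x. -(x powr \<beta>)) u - (\<lambda>x. -(x powr \<beta>)) v"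
  proof (rule f''_imp_f'[where C="{0<..}" and f''="\<lambda>x. - \<beta> * ((\<beta> - 1) * x powr (\<beta> - 1 - 1))"])
    show "convex {0::real<..}" by simp
    show "DERIV (\<lambda>x. -(x powr \<beta>)) x :> - \<beta> * x powr (\<beta> - 1)" if "x \<in> {0<..}" for x
      using that by (auto intro!: derivative_eq_intros has_real_derivative_powr)
    show "DERIV (\<lambda>x. - \<beta> * x powr (\<beta> - 1)) x :> - \<beta> * ((\<beta> - 1) * x powr (\<beta> - 1 - 1))" if "x \<in> {0<..}" for x
      using that by (auto intro!: derivative_eq_intros has_real_derivative_powr)
    show "0 \<le> - \<beta> * ((\<beta> - 1) * x powr (\<beta> - 1 - 1))" if "x \<in> {0<..}" for x
      using assms by (intro mult_nonpos_nonpos mult_nonpos_nonneg) auto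
  qed (use assms in auto)
  then show ?thesis by (simp add: algebra_simps)
qed

lemma powr_split1: fixes v \<alpha> :: real shows "0 \<le> v \<Longrightarrow> v powr \<alpha> = v * v powr (\<alpha> - 1)"
  using powr_mult_base[of v "\<alpha> - 1"] by simp

lemma big_diff_real:
  fixes G u v \<alpha> :: real
  assumes "1 \<le> \<alpha>" "0 < G" "G \<le> u" "u \<le> v"
  shows "G powr (\<alpha> - 1) * (v - u) \<le> v powr \<alpha> - u powr \<alpha>"
proof -
  have a: "u powr (\<alpha> - 1) \<le> v powr (\<alpha> - 1)" using assms by (intro powr_mono2) auto
  have b: "G powr (\<alpha> - 1) \<le> v powr (\<alpha> - 1)" using assms by (intro powr_mono2) auto
  have "v powr \<alpha> - u powr \<alpha> = v * v powr (\<alpha> - 1) - u * u powr (\<alpha> - 1)"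
    using assms by (simp add: powr_split1[symmetric])
  also have "\<dots> \<ge> v * v powr (\<alpha> - 1) - u * v powr (\<alpha> - 1)"
    using a assms by (simp add: mult_left_mono)
  finally have "v powr (\<alpha> - 1) * (v - u) \<le> v powr \<alpha> - u powr \<alpha>" by (simp add: algebra_simps)
  moreover have "G powr (\<alpha> - 1) * (v - u) \<le> v powr (\<alpha> - 1) * (v - u)"
    using b assms by (intro mult_right_mono) auto
  ultimately show ?thesis by linarith
qed

lemma lip_real:
  fixes M u v \<alpha> :: real
  assumes "1 \<le> \<alpha>" "0 \<le> u" "u \<le> v" "v \<le> M"
  shows "v powr \<alpha> - u powr \<alpha> \<le> \<alpha> * M powr (\<alpha> - 1) * (v - u)"
proof -
  have vM: "v powr (\<alpha> - 1) \<le> M powr (\<alpha> - 1)" using assms by (intro powr_mono2) auto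
  have "v powr \<alpha> - u powr \<alpha> \<le> \<alpha> * v powr (\<alpha> - 1) * (v - u)"
  proof (cases "u = 0")
    case True
    have "v powr \<alpha> = 1 * (v * v powr (\<alpha> - 1))" using assms by (simp add: powr_split1[symmetric])
    also have "\<dots> \<le> \<alpha> * (v * v powr (\<alpha> - 1))" using assms by (intro mult_right_mono) auto
    finally show ?thesis using True assms by (simp add: algebra_simps)
  next
    case False
    then have "0 < u" using assms by auto
    then have "\<alpha> * v powr (\<alpha> - 1) * (u - v) \<le> u powr \<alpha> - v powr \<alpha>"
      using assms by (intro powr_tangent_convex) auto
    then show ?thesis by (simp add: algebra_simps)
  qed
  also have "\<dots> \<le> \<alpha> * M powr (\<alpha> - 1) * (v - u)"
    using vM assms by (intro mult_right_mono mult_left_mono) auto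
  finally show ?thesis .
qed

lemma PP_big:
  fixes x y :: int and G \<alpha> :: real
  assumes "1 \<le> \<alpha>" "0 < G" "G \<le> \<bar>x\<bar>" "G \<le> \<bar>y\<bar>" "(0 < x \<and> 0 < y) \<or> (x < 0 \<and> y < 0)"
  shows "G powr (\<alpha> - 1) * \<bar>x - y\<bar> \<le> \<bar>PP \<alpha> x - PP \<alpha> y\<bar>"
proof -
  have key: "G powr (\<alpha> - 1) * \<bar>x - y\<bar> \<le> \<bar>PP \<alpha> x - PP \<alpha> y\<bar>"
    if "G \<le> \<bar>x\<bar>" "\<bar>x\<bar> \<le> \<bar>y\<bar>" "(0 < x \<and> 0 < y) \<or> (x < 0 \<and> y < 0)" for x y :: int
  proof -
    have e: "real_of_int \<bar>x - y\<bar> = \<bar>real_of_int y\<bar> - \<bar>real_of_int x\<bar>"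
      using that by auto
    have "G powr (\<alpha> - 1) * (\<bar>real_of_int y\<bar> - \<bar>real_of_int x\<bar>) \<le> \<bar>real_of_int y\<bar> powr \<alpha> - \<bar>real_of_int x\<bar> powr \<alpha>"
      using that assms by (intro big_diff_real) auto
    also have "\<dots> \<le> \<bar>PP \<alpha> x - PP \<alpha> y\<bar>" unfolding PP_def by linarith
    finally show ?thesis using e by simp
  qed
  show ?thesis
  proof (cases "\<bar>x\<bar> \<le> \<bar>y\<bar>")
    case True then show ?thesis using key assms by auto
  next
    case False
    have "G powr (\<alpha> - 1) * \<bar>y - x\<bar> \<le> \<bar>PP \<alpha> y - PP \<alpha> x\<bar>" by (rule key) (use assms False in auto)
    then show ?thesis by (metis abs_minus_commute)
  qed
qed

lemma PP_lip:
  fixes s t :: int and M \<alpha> :: real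
  assumes "1 \<le> \<alpha>" "\<bar>s\<bar> \<le> M" "\<bar>t\<bar> \<le> M"
  shows "\<bar>PP \<alpha> s - PP \<alpha> t\<bar> \<le> \<alpha> * M powr (\<alpha> - 1) * \<bar>s - t\<bar>"
proof -
  have key: "\<bar>PP \<alpha> s - PP \<alpha> t\<bar> \<le> \<alpha> * M powr (\<alpha> - 1) * \<bar>s - t\<bar>"
    if "\<bar>s\<bar> \<le> \<bar>t\<bar>" "\<bar>t\<bar> \<le> M" for s t :: int
  proof -
    have st: "\<bar>real_of_int s\<bar> \<le> \<bar>real_of_int t\<bar>" using that by simp
    have "\<bar>real_of_int t\<bar> powr \<alpha> - \<bar>real_of_int s\<bar> powr \<alpha> \<le> \<alpha> * M powr (\<alpha> - 1) * (\<bar>real_of_int t\<bar> - \<bar>real_of_int s\<bar>)"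
      using that assms st by (intro lip_real) auto
    moreover have "\<bar>real_of_int s\<bar> powr \<alpha> \<le> \<bar>real_of_int t\<bar> powr \<alpha>" using st assms by (intro powr_mono2) auto
    moreover have "\<alpha> * M powr (\<alpha> - 1) * (\<bar>real_of_int t\<bar> - \<bar>real_of_int s\<bar>) \<le> \<alpha> * M powr (\<alpha> - 1) * real_of_int \<bar>s - t\<bar>"
      using assms by (intro mult_left_mono) auto
    ultimately show ?thesis unfolding PP_def by linarith
  qed
  show ?thesis
  proof (cases "\<bar>s\<bar> \<le> \<bar>t\<bar>")
    case True then show ?thesis using key assms by auto
  next
    case False
    have "\<bar>PP \<alpha> t - PP \<alpha> s\<bar> \<le> \<alpha> * M powr (\<alpha> - 1) * \<bar>t - s\<bar>" by (rule key) (use assms False in auto)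
    then show ?thesis by (metis abs_minus_commute)
  qed
qed


lemma strong_tangent:
  fixes \<alpha> R x y :: real
  assumes "1 < \<alpha>" "\<alpha> < 2" "0 < x" "x \<le> R" "0 < y" "y \<le> R"
  defines "\<kappa> \<equiv> \<alpha> * (\<alpha> - 1) * R powr (\<alpha> - 2)"
  shows "(\<alpha> * x powr (\<alpha> - 1) - \<kappa> * x) * (y - x) \<le> (y powr \<alpha> - \<kappa> / 2 * y\<^sup>2) - (x powr \<alpha> - \<kappa> / 2 * x\<^sup>2)"
proof -
  have "(\<lambda>x. \<alpha> * x powr (\<alpha> - 1) - \<kappa> * x) x * (y - x) \<le> (\<lambda>x. x powr \<alpha> - \<kappa> / 2 * x\<^sup>2) y - (\<lambda>x. x powr \<alpha> - \<kappa> / 2 * x\<^sup>2) x"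
  proof (rule f''_imp_f'[where C="{0<..R}" and f''="\<lambda>x. \<alpha> * ((\<alpha> - 1) * x powr (\<alpha> - 1 - 1)) - \<kappa>"])
    show "convex {0<..R}" by simp
    show "DERIV (\<lambda>x. x powr \<alpha> - \<kappa> / 2 * x\<^sup>2) z :> \<alpha> * z powr (\<alpha> - 1) - \<kappa> * z" if "z \<in> {0<..R}" for z
      using that by (auto intro!: derivative_eq_intros has_real_derivative_powr)
    show "DERIV (\<lambda>x. \<alpha> * x powr (\<alpha> - 1) - \<kappa> * x) z :> \<alpha> * ((\<alpha> - 1) * z powr (\<alpha> - 1 - 1)) - \<kappa>" if "z \<in> {0<..R}" for z
      using that by (auto intro!: derivative_eq_intros has_real_derivative_powr)
    show "0 \<le> \<alpha> * ((\<alpha> - 1) * z powr (\<alpha> - 1 - 1)) - \<kappa>" if "z \<in> {0<..R}" for z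
    proof -
      have "R powr (\<alpha> - 2) \<le> z powr (\<alpha> - 2)" using that assms by (intro powr_mono2') auto
      then have "\<alpha> * (\<alpha> - 1) * R powr (\<alpha> - 2) \<le> \<alpha> * (\<alpha> - 1) * z powr (\<alpha> - 2)"
        using assms by (intro mult_left_mono) auto
      then show ?thesis unfolding \<kappa>_def by (simp add: algebra_simps)
    qed
  qed (use assms in auto)
  then show ?thesis by simp
qed

definition SD :: "real \<Rightarrow> int \<Rightarrow> real" where
  "SD \<alpha> t = PP \<alpha> (t + 2) - 2 * PP \<alpha> (t + 1) + PP \<alpha> t"

definition kap0 :: "real \<Rightarrow> real" where
  "kap0 \<alpha> = min (\<alpha> * (\<alpha> - 1)) (2 powr \<alpha> - 2)"

lemma kap0_pos: "1 < \<alpha> \<Longrightarrow> 0 < kap0 \<alpha>"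
proof -
  assume a: "1 < \<alpha>"
  have "2 powr 1 < 2 powr \<alpha>" using a by (intro powr_less_mono) auto
  then show ?thesis using a unfolding kap0_def by auto
qed

lemma kap0_le2: "1 < \<alpha> \<Longrightarrow> \<alpha> < 2 \<Longrightarrow> kap0 \<alpha> \<le> 2"
proof -
  assume a: "1 < \<alpha>" "\<alpha> < 2"
  have "\<alpha> * (\<alpha> - 1) \<le> 2 * 1" using a by (intro mult_mono) auto
  then show ?thesis unfolding kap0_def by auto
qed

lemma SD_pos1:
  fixes t :: int and R \<alpha> :: real
  assumes "1 < \<alpha>" "\<alpha> < 2" "1 \<le> t" "t + 2 \<le> R"
  shows "\<alpha> * (\<alpha> - 1) * R powr (\<alpha> - 2) \<le> SD \<alpha> t"
proof -
  define \<kappa> where "\<kappa> = \<alpha> * (\<alpha> - 1) * R powr (\<alpha> - 2)"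
  define x where "x = real_of_int t + 1"
  have x: "0 < x" "x \<le> R" using assms by (auto simp: x_def)
  have 1: "(\<alpha> * x powr (\<alpha> - 1) - \<kappa> * x) * ((x - 1) - x) \<le> ((x - 1) powr \<alpha> - \<kappa> / 2 * (x - 1)\<^sup>2) - (x powr \<alpha> - \<kappa> / 2 * x\<^sup>2)"
    unfolding \<kappa>_def using assms x by (intro strong_tangent) (auto simp: x_def)
  have 2: "(\<alpha> * x powr (\<alpha> - 1) - \<kappa> * x) * ((x + 1) - x) \<le> ((x + 1) powr \<alpha> - \<kappa> / 2 * (x + 1)\<^sup>2) - (x powr \<alpha> - \<kappa> / 2 * x\<^sup>2)"
    unfolding \<kappa>_def using assms x by (intro strong_tangent) (auto simp: x_def)
  have e: "SD \<alpha> t = (x + 1) powr \<alpha> - 2 * x powr \<alpha> + (x - 1) powr \<alpha>"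
    using assms unfolding SD_def PP_def x_def by (simp add: add.commute)
  have "\<kappa> \<le> SD \<alpha> t" using 1 2 unfolding e by (simp add: power2_eq_square algebra_simps, simp add: add_divide_distrib)
  then show ?thesis by (simp add: \<kappa>_def)
qed

lemma Rpow_le1: "1 \<le> R \<Longrightarrow> \<alpha> \<le> 2 \<Longrightarrow> R powr (\<alpha> - 2) \<le> 1"
  for R \<alpha> :: real
  using powr_mono2'[of "\<alpha> - 2" 1 R] by simp

lemma SD_lower_nonneg:
  fixes t :: int and R \<alpha> :: real
  assumes "1 < \<alpha>" "\<alpha> < 2" "0 \<le> t" "t + 2 \<le> R" "1 \<le> R"
  shows "kap0 \<alpha> * R powr (\<alpha> - 2) \<le> SD \<alpha> t"
proof (cases "t = 0")
  case True
  have "kap0 \<alpha> * R powr (\<alpha> - 2) \<le> kap0 \<alpha> * 1"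
    using kap0_pos[of \<alpha>] assms Rpow_le1[of R \<alpha>] by (intro mult_left_mono) auto
  also have "\<dots> \<le> 2 powr \<alpha> - 2" unfolding kap0_def by simp
  also have "\<dots> = SD \<alpha> t" using True by (simp add: SD_def PP_def)
  finally show ?thesis .
next
  case False
  have "kap0 \<alpha> * R powr (\<alpha> - 2) \<le> \<alpha> * (\<alpha> - 1) * R powr (\<alpha> - 2)"
    unfolding kap0_def by (intro mult_right_mono) auto
  also have "\<dots> \<le> SD \<alpha> t" using assms False by (intro SD_pos1) auto
  finally show ?thesis .
qed

lemma SD_lower:
  fixes t :: int and R \<alpha> :: real
  assumes "1 < \<alpha>" "\<alpha> < 2" "- R \<le> t" "t + 2 \<le> R" "1 \<le> R"
  shows "kap0 \<alpha> * R powr (\<alpha> - 2) \<le> SD \<alpha> t"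
proof -
  consider "0 \<le> t" | "t = -1" | "t \<le> -2" by linarith
  then show ?thesis
  proof cases
    case 1 then show ?thesis using assms SD_lower_nonneg by auto
  next
    case 2
    have "kap0 \<alpha> * R powr (\<alpha> - 2) \<le> kap0 \<alpha> * 1"
      using kap0_pos[of \<alpha>] assms Rpow_le1[of R \<alpha>] by (intro mult_left_mono) auto
    also have "\<dots> \<le> 2" using kap0_le2 assms by auto
    also have "\<dots> = SD \<alpha> t" using 2 by (simp add: SD_def PP_def)
    finally show ?thesis .
  next
    case 3
    have "SD \<alpha> t = SD \<alpha> (- t - 2)"
    proof -
      have a: "PP \<alpha> (t + 2) = PP \<alpha> (- t - 2)" using PP_neg[of \<alpha> "t + 2"] by simp
      have "- t - 2 + 1 = - (t + 1)" by simp
      then have b: "PP \<alpha> (t + 1) = PP \<alpha> (- t - 2 + 1)" by (simp only: PP_neg)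
      have c: "PP \<alpha> t = PP \<alpha> (- t - 2 + 2)" using PP_neg[of \<alpha> "t"] by simp
      show ?thesis unfolding SD_def a b c by simp
    qed
    moreover have "kap0 \<alpha> * R powr (\<alpha> - 2) \<le> SD \<alpha> (- t - 2)"
      using assms 3 by (intro SD_lower_nonneg) auto
    ultimately show ?thesis by simp
  qed
qed

lemma h_step:
  fixes t :: int and R \<alpha> :: real and n :: nat
  assumes "1 < \<alpha>" "\<alpha> < 2" "- R \<le> t" "t + 1 + int n \<le> R" "1 \<le> R"
  shows "real n * (kap0 \<alpha> * R powr (\<alpha> - 2)) \<le> (PP \<alpha> (t + 1 + int n) - PP \<alpha> (t + 1)) - (PP \<alpha> (t + int n) - PP \<alpha> t)"
  using assms(4)
proof (induction n)
  case 0 then show ?case by simp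
next
  case (Suc n)
  have ih: "real n * (kap0 \<alpha> * R powr (\<alpha> - 2)) \<le> (PP \<alpha> (t + 1 + int n) - PP \<alpha> (t + 1)) - (PP \<alpha> (t + int n) - PP \<alpha> t)"
    using Suc by auto
  have sd: "kap0 \<alpha> * R powr (\<alpha> - 2) \<le> SD \<alpha> (t + int n)"
    using Suc.prems assms by (intro SD_lower) auto
  have e1: "t + 1 + int (Suc n) = t + int n + 2" by simp
  have e2: "t + int (Suc n) = t + int n + 1" by simp
  show ?case using ih sd unfolding e1 e2 SD_def by (simp add: algebra_simps)
qed

lemma h_mono:
  fixes c :: int and R \<alpha> :: real and m e :: nat
  assumes "1 < \<alpha>" "\<alpha> < 2" "- R \<le> c" "c + int m + int e \<le> R" "1 \<le> R"
  shows "real m * real e * (kap0 \<alpha> * R powr (\<alpha> - 2)) \<le> (PP \<alpha> (c + int m + int e) - PP \<alpha> (c + int m)) - (PP \<alpha> (c + int e) - PP \<alpha> c)"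
  using assms(4)
proof (induction m)
  case 0 then show ?case by simp
next
  case (Suc m)
  have ih: "real m * real e * (kap0 \<alpha> * R powr (\<alpha> - 2)) \<le> (PP \<alpha> (c + int m + int e) - PP \<alpha> (c + int m)) - (PP \<alpha> (c + int e) - PP \<alpha> c)"
    using Suc by auto
  have st: "real e * (kap0 \<alpha> * R powr (\<alpha> - 2)) \<le> (PP \<alpha> (c + int m + 1 + int e) - PP \<alpha> (c + int m + 1)) - (PP \<alpha> (c + int m + int e) - PP \<alpha> (c + int m))"
    using Suc.prems assms by (intro h_step) auto
  have e1: "c + int (Suc m) = c + int m + 1" by simp
  show ?case using ih st unfolding e1 by (simp add: algebra_simps)
qed

lemma harm_int:
  fixes \<beta> :: real and n :: nat
  assumes "0 < \<beta>" "\<beta> \<le> 1"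
  shows "(\<Sum>e\<in>{1..int n}. 1 / real_of_int e) \<le> real n powr \<beta> / \<beta>"
proof (induction n)
  case 0 then show ?case by simp
next
  case (Suc n)
  have s: "{1..int (Suc n)} = insert (int n + 1) {1..int n}" by auto
  have "(\<Sum>e\<in>{1..int (Suc n)}. 1 / real_of_int e) = 1 / (real n + 1) + (\<Sum>e\<in>{1..int n}. 1 / real_of_int e)"
    unfolding s by (subst sum.insert) auto
  also have "\<dots> \<le> 1 / (real n + 1) + real n powr \<beta> / \<beta>" using Suc by simp
  also have "\<dots> \<le> real (Suc n) powr \<beta> / \<beta>"
  proof (cases "n = 0")
    case True then show ?thesis using assms by simp
  next
    case False
    have t: "real n powr \<beta> \<le> (real n + 1) powr \<beta> + \<beta> * (real n + 1) powr (\<beta> - 1) * (real n - (real n + 1))"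
      using False assms by (intro powr_tangent_concave) auto
    have "(real n + 1) powr (- 1) \<le> (real n + 1) powr (\<beta> - 1)"
      using assms by (intro powr_mono) auto
    then have "1 / (real n + 1) \<le> (real n + 1) powr (\<beta> - 1)"
      by (simp add: powr_minus divide_inverse)
    then have "1 / (real n + 1) + real n powr \<beta> / \<beta> \<le> (real n + 1) powr (\<beta> - 1) + ((real n + 1) powr \<beta> - \<beta> * (real n + 1) powr (\<beta> - 1)) / \<beta>"
      using t assms by (intro add_mono divide_right_mono) auto
    also have "\<dots> = (real n + 1) powr \<beta> / \<beta>" using assms by (simp add: field_simps)
    finally show ?thesis by (simp add: add.commute)
  qed
  finally show ?case .
qed


lemma card_diam:
  fixes F :: "'a set" and g :: "'a \<Rightarrow> int" and \<phi> :: "'a \<Rightarrow> real"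
  assumes fin: "finite F" and inj: "inj_on g F" and d: "0 < \<delta>" and L: "0 \<le> L"
    and sep: "\<forall>x\<in>F. \<forall>y\<in>F. g x < g y \<longrightarrow> \<delta> * real_of_int (g y - g x) \<le> \<bar>\<phi> y - \<phi> x\<bar>"
    and bd: "\<forall>x\<in>F. \<bar>\<phi> x - c\<bar> \<le> L"
  shows "real (card F) \<le> 2 * L / \<delta> + 1"
proof (cases "F = {}")
  case True then show ?thesis using d L by simp
next
  case False
  define z0 where "z0 = Min (g ` F)"
  have z0in: "z0 \<in> g ` F" unfolding z0_def using fin False by (intro Min_in) auto
  then obtain x0 where x0: "x0 \<in> F" "g x0 = z0" by auto
  have z0le: "z0 \<le> g y" if "y \<in> F" for y unfolding z0_def using fin that by (intro Min_le) auto
  define w where "w = \<lfloor>2 * L / \<delta>\<rfloor>"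
  have w0: "0 \<le> w" unfolding w_def using L d by simp
  have sub: "g ` F \<subseteq> {z0..z0 + w}"
  proof
    fix z assume "z \<in> g ` F"
    then obtain y where y: "y \<in> F" "z = g y" by auto
    have "g y - z0 \<le> w"
    proof (cases "z0 < g y")
      case True
      have "\<delta> * real_of_int (g y - z0) \<le> \<bar>\<phi> y - \<phi> x0\<bar>" using sep x0 y True by auto
      also have "\<dots> \<le> 2 * L" using bd x0 y by (smt (verit))
      finally have "real_of_int (g y - z0) \<le> 2 * L / \<delta>" using d by (simp add: field_simps)
      then show ?thesis unfolding w_def by linarith
    next
      case False
      have "0 \<le> w" unfolding w_def using L d by simp
      then show ?thesis using False by linarith
    qed
    then show "z \<in> {z0..z0 + w}" using y z0le by auto
  qed
  have "card F = card (g ` F)" using inj by (simp add: card_image)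
  also have "\<dots> \<le> card {z0..z0 + w}" using sub by (intro card_mono) auto
  finally have "real (card F) \<le> real (card {z0..z0 + w})" by simp
  also have "\<dots> \<le> real_of_int (w + 1)" using w0 by simp
  also have "\<dots> \<le> 2 * L / \<delta> + 1" unfolding w_def by linarith
  finally show ?thesis .
qed

lemma large_fiber:
  fixes T :: "'a set" and x1 x2 idx :: "'a \<Rightarrow> int" and \<rho> :: "'a \<Rightarrow> real" and I :: "int set" and G M :: real
  assumes a1: "1 \<le> \<alpha>" and G: "0 < G" and M: "1 \<le> M" and GM: "2 * \<alpha> * M powr (\<alpha> - 1) \<le> G powr (\<alpha> - 1)"
    and finT: "finite T" and finI: "finite I" and C0: "0 \<le> C0"
    and e1: "\<bar>e1\<bar> = 1" and e2: "\<bar>e2\<bar> = 1"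
    and H1: "\<forall>u\<in>T. \<forall>w\<in>T. idx u = idx w \<longrightarrow> \<bar>x1 u - x1 w\<bar> = \<bar>x2 u - x2 w\<bar>"
    and H2: "\<forall>u\<in>T. \<forall>w\<in>T. idx u = idx w \<longrightarrow> x1 u = x1 w \<longrightarrow> u = w"
    and H3: "\<forall>u\<in>T. G \<le> \<bar>x1 u\<bar> \<and> \<bar>x2 u\<bar> \<le> M \<and> idx u \<in> I"
    and H4: "\<forall>u\<in>T. \<bar>e1 * PP \<alpha> (x1 u) + e2 * PP \<alpha> (x2 u) + \<rho> u\<bar> \<le> C0"
    and H5: "\<forall>u\<in>T. \<forall>w\<in>T. idx u = idx w \<longrightarrow> \<rho> u = \<rho> w"
  shows "real (card T) \<le> real (card I) * (4 * C0 + 2)"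
proof -
  define F where "F z s = {u\<in>T. idx u = z \<and> (0 < x1 u \<longleftrightarrow> s)}" for z s
  have Mb: "1 \<le> M powr (\<alpha> - 1)" using M a1 by (intro ge_one_powr_ge_zero) auto
  have cardF: "real (card (F z s)) \<le> 2 * C0 + 1" for z s
  proof -
    have "real (card (F z s)) \<le> 2 * C0 / 1 + 1"
    proof (rule card_diam[where g=x1 and c=0 and \<phi>="\<lambda>u. e1 * PP \<alpha> (x1 u) + e2 * PP \<alpha> (x2 u) + \<rho> u"])
      show "finite (F z s)" using finT unfolding F_def by auto
      show "inj_on x1 (F z s)" using H2 unfolding F_def inj_on_def by auto
      show "\<forall>x\<in>F z s. \<bar>e1 * PP \<alpha> (x1 x) + e2 * PP \<alpha> (x2 x) + \<rho> x - 0\<bar> \<le> C0" using H4 unfolding F_def by auto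
      show "\<forall>x\<in>F z s. \<forall>y\<in>F z s. x1 x < x1 y \<longrightarrow> 1 * real_of_int (x1 y - x1 x)
          \<le> \<bar>e1 * PP \<alpha> (x1 y) + e2 * PP \<alpha> (x2 y) + \<rho> y - (e1 * PP \<alpha> (x1 x) + e2 * PP \<alpha> (x2 x) + \<rho> x)\<bar>"
      proof (intro ballI impI)
        fix x y assume x: "x \<in> F z s" and y: "y \<in> F z s" and lt: "x1 x < x1 y"
        have xT: "x \<in> T" "y \<in> T" "idx x = idx y" using x y unfolding F_def by auto
        have sg: "(0 < x1 y \<and> 0 < x1 x) \<or> (x1 y < 0 \<and> x1 x < 0)"
          using x y H3 G unfolding F_def by (cases s) force+
        have D: "\<bar>x2 y - x2 x\<bar> = \<bar>x1 y - x1 x\<bar>" using H1 xT by metis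
        have rr: "\<rho> y = \<rho> x" using H5 xT by metis
        have big: "G powr (\<alpha> - 1) * \<bar>x1 y - x1 x\<bar> \<le> \<bar>PP \<alpha> (x1 y) - PP \<alpha> (x1 x)\<bar>"
          using H3 xT sg a1 G by (intro PP_big) auto
        have small: "\<bar>PP \<alpha> (x2 y) - PP \<alpha> (x2 x)\<bar> \<le> \<alpha> * M powr (\<alpha> - 1) * \<bar>x2 y - x2 x\<bar>"
          using H3 xT a1 by (intro PP_lip) auto
        have "\<bar>e1 * PP \<alpha> (x1 y) + e2 * PP \<alpha> (x2 y) + \<rho> y - (e1 * PP \<alpha> (x1 x) + e2 * PP \<alpha> (x2 x) + \<rho> x)\<bar>
             = \<bar>e1 * (PP \<alpha> (x1 y) - PP \<alpha> (x1 x)) + e2 * (PP \<alpha> (x2 y) - PP \<alpha> (x2 x))\<bar>"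
          using rr by (simp add: algebra_simps)
        also have "\<dots> \<ge> \<bar>PP \<alpha> (x1 y) - PP \<alpha> (x1 x)\<bar> - \<bar>PP \<alpha> (x2 y) - PP \<alpha> (x2 x)\<bar>"
        proof -
          have "\<bar>e1 * (PP \<alpha> (x1 y) - PP \<alpha> (x1 x))\<bar> = \<bar>PP \<alpha> (x1 y) - PP \<alpha> (x1 x)\<bar>" using e1 by (simp add: abs_mult)
          moreover have "\<bar>e2 * (PP \<alpha> (x2 y) - PP \<alpha> (x2 x))\<bar> = \<bar>PP \<alpha> (x2 y) - PP \<alpha> (x2 x)\<bar>" using e2 by (simp add: abs_mult)
          ultimately show ?thesis by linarith
        qed
        finally have f1: "\<bar>PP \<alpha> (x1 y) - PP \<alpha> (x1 x)\<bar> - \<bar>PP \<alpha> (x2 y) - PP \<alpha> (x2 x)\<bar> \<le> \<bar>e1 * PP \<alpha> (x1 y) + e2 * PP \<alpha> (x2 y) + \<rho> y - (e1 * PP \<alpha> (x1 x) + e2 * PP \<alpha> (x2 x) + \<rho> x)\<bar>" .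
        define \<Delta> where "\<Delta> = real_of_int \<bar>x1 y - x1 x\<bar>"
        have \<Delta>: "\<Delta> = real_of_int (x1 y - x1 x)" "0 \<le> \<Delta>" using lt unfolding \<Delta>_def by auto
        have "1 * real_of_int (x1 y - x1 x) \<le> (\<alpha> * M powr (\<alpha> - 1)) * \<Delta>"
        proof -
          have o: "1 \<le> \<alpha> * M powr (\<alpha> - 1)" using a1 Mb by (metis mult_mono' mult_1 zero_le_one order_trans)
          show ?thesis using \<Delta> mult_right_mono[OF o, of \<Delta>] by simp
        qed
        also have "\<dots> = 2 * \<alpha> * M powr (\<alpha> - 1) * \<Delta> - \<alpha> * M powr (\<alpha> - 1) * \<Delta>" by simp
        also have "\<dots> \<le> G powr (\<alpha> - 1) * \<Delta> - \<alpha> * M powr (\<alpha> - 1) * \<Delta>"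
          using mult_right_mono[OF GM \<Delta>(2)] by linarith
        also have "\<dots> \<le> \<bar>PP \<alpha> (x1 y) - PP \<alpha> (x1 x)\<bar> - \<bar>PP \<alpha> (x2 y) - PP \<alpha> (x2 x)\<bar>"
          using big small D unfolding \<Delta>_def by simp
        finally show "1 * real_of_int (x1 y - x1 x) \<le> \<bar>e1 * PP \<alpha> (x1 y) + e2 * PP \<alpha> (x2 y) + \<rho> y - (e1 * PP \<alpha> (x1 x) + e2 * PP \<alpha> (x2 x) + \<rho> x)\<bar>"
          using f1 by linarith
      qed
    qed (use C0 in auto)
    then show ?thesis by simp
  qed
  have sub: "T \<subseteq> (\<Union>z\<in>I. F z True \<union> F z False)" using H3 unfolding F_def by auto
  have "card T \<le> card (\<Union>z\<in>I. F z True \<union> F z False)"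
    using sub finI finT unfolding F_def by (intro card_mono) auto
  also have "\<dots> \<le> (\<Sum>z\<in>I. card (F z True \<union> F z False))" using finI by (rule card_UN_le)
  also have "\<dots> \<le> (\<Sum>z\<in>I. card (F z True) + card (F z False))" by (intro sum_mono card_Un_le)
  finally have "real (card T) \<le> real (\<Sum>z\<in>I. card (F z True) + card (F z False))" by linarith
  also have "\<dots> = (\<Sum>z\<in>I. real (card (F z True)) + real (card (F z False)))" by simp
  also have "\<dots> \<le> (\<Sum>z\<in>I. (2 * C0 + 1) + (2 * C0 + 1))" by (intro sum_mono add_mono cardF)
  also have "\<dots> = real (card I) * (4 * C0 + 2)" by simp
  finally show ?thesis .
qed


lemma A_sep:
  fixes x y e :: int and R :: nat and \<alpha> :: real
  assumes a: "1 < \<alpha>" "\<alpha> < 2" "1 \<le> R" and e: "e \<noteq> 0" and xy: "x < y"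
    and bx: "\<bar>x\<bar> \<le> int R" "\<bar>x + e\<bar> \<le> int R" and by': "\<bar>y\<bar> \<le> int R" "\<bar>y + e\<bar> \<le> int R"
  shows "kap0 \<alpha> * real R powr (\<alpha> - 2) * \<bar>real_of_int e\<bar> * real_of_int (y - x)
     \<le> \<bar>(PP \<alpha> (y + e) - PP \<alpha> y) - (PP \<alpha> (x + e) - PP \<alpha> x)\<bar>"
proof (cases "0 < e")
  case True
  have h: "real (nat (y - x)) * real (nat e) * (kap0 \<alpha> * real R powr (\<alpha> - 2))
     \<le> (PP \<alpha> (x + int (nat (y - x)) + int (nat e)) - PP \<alpha> (x + int (nat (y - x)))) - (PP \<alpha> (x + int (nat e)) - PP \<alpha> x)"
    using a True xy bx by' by (intro h_mono) auto
  have e0: "int (nat e) = e" "int (nat (y - x)) = y - x" using True xy by auto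
  have e1: "x + (y - x) + e = y + e" "x + (y - x) = y" by auto
  have e2: "real (nat (y - x)) = real_of_int (y - x)" "real (nat e) = \<bar>real_of_int e\<bar>" using True xy by auto
  have h': "real_of_int (y - x) * \<bar>real_of_int e\<bar> * (kap0 \<alpha> * real R powr (\<alpha> - 2))
     \<le> (PP \<alpha> (y + e) - PP \<alpha> y) - (PP \<alpha> (x + e) - PP \<alpha> x)"
    using h by (simp only: e0 e1 e2)
  have "kap0 \<alpha> * real R powr (\<alpha> - 2) * \<bar>real_of_int e\<bar> * real_of_int (y - x) = real_of_int (y - x) * \<bar>real_of_int e\<bar> * (kap0 \<alpha> * real R powr (\<alpha> - 2))"
    by (simp only: mult_ac)
  then show ?thesis using h' by linarith
next
  case False
  then have en: "e < 0" using e by auto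
  have h: "real (nat (y - x)) * real (nat (- e)) * (kap0 \<alpha> * real R powr (\<alpha> - 2))
     \<le> (PP \<alpha> ((x + e) + int (nat (y - x)) + int (nat (- e))) - PP \<alpha> ((x + e) + int (nat (y - x))))
        - (PP \<alpha> ((x + e) + int (nat (- e))) - PP \<alpha> (x + e))"
    using a en xy bx by' by (intro h_mono) auto
  have e0: "int (nat (- e)) = - e" "int (nat (y - x)) = y - x" using en xy by auto
  have e1: "(x + e) + (y - x) + - e = y" "(x + e) + (y - x) = y + e" "(x + e) + - e = x" "y + e + - e = y" by auto
  have e2: "real (nat (y - x)) = real_of_int (y - x)" "real (nat (- e)) = \<bar>real_of_int e\<bar>" using en xy by auto
  have h': "real_of_int (y - x) * \<bar>real_of_int e\<bar> * (kap0 \<alpha> * real R powr (\<alpha> - 2))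
     \<le> (PP \<alpha> y - PP \<alpha> (y + e)) - (PP \<alpha> x - PP \<alpha> (x + e))"
    using h by (simp only: e0 e1 e2)
  have "kap0 \<alpha> * real R powr (\<alpha> - 2) * \<bar>real_of_int e\<bar> * real_of_int (y - x) = real_of_int (y - x) * \<bar>real_of_int e\<bar> * (kap0 \<alpha> * real R powr (\<alpha> - 2))"
    by (simp only: mult_ac)
  then show ?thesis using h' by linarith
qed

definition C1 :: "real \<Rightarrow> real \<Rightarrow> real" where
  "C1 \<alpha> C0 = 4 + 8 * C0 / (kap0 \<alpha> * (\<alpha> - 1))"

lemma Q_bound:
  fixes a :: int and m C0 \<alpha> :: real and R :: nat
  assumes a: "1 < \<alpha>" "\<alpha> < 2" and C0: "0 \<le> C0" and R: "1 \<le> R"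
  shows "real (card {(b, c). b \<noteq> c \<and> \<bar>b\<bar> \<le> int R \<and> \<bar>c\<bar> \<le> int R \<and>
            \<bar>PP \<alpha> a + PP \<alpha> b - PP \<alpha> c - PP \<alpha> (a + b - c) - m\<bar> \<le> C0}) \<le> C1 \<alpha> C0 * real R"
proof -
  define Q where "Q = {(b, c). b \<noteq> c \<and> \<bar>b\<bar> \<le> int R \<and> \<bar>c\<bar> \<le> int R \<and>
            \<bar>PP \<alpha> a + PP \<alpha> b - PP \<alpha> c - PP \<alpha> (a + b - c) - m\<bar> \<le> C0}"
  define \<kappa> where "\<kappa> = kap0 \<alpha> * real R powr (\<alpha> - 2)"
  have k0: "0 < kap0 \<alpha>" using a kap0_pos by auto
  have kp: "0 < \<kappa>" unfolding \<kappa>_def using k0 R by simp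
  define E1 where "E1 = {1..2 * int R}"
  define E where "E = E1 \<union> uminus ` E1"
  define A where "A e = {c. \<bar>c\<bar> \<le> int R \<and> \<bar>c + e\<bar> \<le> int R \<and>
        \<bar>(PP \<alpha> (c + e) - PP \<alpha> c) - (m - PP \<alpha> a + PP \<alpha> (a + e))\<bar> \<le> C0}" for e
  have finE1: "finite E1" unfolding E1_def by simp
  have finE: "finite E" unfolding E_def using finE1 by simp
  have finA: "finite (A e)" for e
    by (rule finite_subset[of _ "{- int R..int R}"]) (auto simp: A_def)
  have sub: "Q \<subseteq> (\<Union>e\<in>E. (\<lambda>c. (c + e, c)) ` A e)"
  proof
    fix q assume q: "q \<in> Q"
    then obtain b c where bc: "q = (b, c)" by (cases q)
    define e where "e = b - c"
    have ne: "e \<noteq> 0" using q bc unfolding Q_def e_def by auto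
    have eb: "\<bar>e\<bar> \<le> 2 * int R" using q bc unfolding Q_def e_def by auto
    have eE: "e \<in> E"
    proof (cases "0 < e")
      case True then show ?thesis using eb unfolding E_def E1_def by auto
    next
      case False
      then have "- e \<in> E1" using ne eb unfolding E1_def by auto
      then have "- (- e) \<in> uminus ` E1" by blast
      then show ?thesis unfolding E_def by auto
    qed
    have "a + b - c = a + e" unfolding e_def by simp
    then have "c \<in> A e" using q bc unfolding Q_def A_def e_def by (auto simp: algebra_simps)
    moreover have "q = (c + e, c)" using bc unfolding e_def by simp
    ultimately show "q \<in> (\<Union>e\<in>E. (\<lambda>c. (c + e, c)) ` A e)" using eE by blast
  qed
  have cardA: "real (card (A e)) \<le> 2 * C0 / (\<kappa> * \<bar>real_of_int e\<bar>) + 1" if eE: "e \<in> E" for e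
  proof -
    have ne: "e \<noteq> 0" using eE unfolding E_def E1_def by auto
    show ?thesis
    proof (rule card_diam[where g="\<lambda>c. c" and c="m - PP \<alpha> a + PP \<alpha> (a + e)"
          and \<phi>="\<lambda>c. PP \<alpha> (c + e) - PP \<alpha> c"])
      show "finite (A e)" by (rule finA)
      show "0 < \<kappa> * \<bar>real_of_int e\<bar>" using kp ne by simp
      show "\<forall>x\<in>A e. \<bar>PP \<alpha> (x + e) - PP \<alpha> x - (m - PP \<alpha> a + PP \<alpha> (a + e))\<bar> \<le> C0"
        unfolding A_def by auto
      show "\<forall>x\<in>A e. \<forall>y\<in>A e. x < y \<longrightarrow> \<kappa> * \<bar>real_of_int e\<bar> * real_of_int (y - x)
           \<le> \<bar>PP \<alpha> (y + e) - PP \<alpha> y - (PP \<alpha> (x + e) - PP \<alpha> x)\<bar>"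
      proof (intro ballI impI)
        fix x y assume "x \<in> A e" "y \<in> A e" "x < y"
        then show "\<kappa> * \<bar>real_of_int e\<bar> * real_of_int (y - x) \<le> \<bar>PP \<alpha> (y + e) - PP \<alpha> y - (PP \<alpha> (x + e) - PP \<alpha> x)\<bar>"
          unfolding \<kappa>_def using a R ne by (intro A_sep) (auto simp: A_def)
      qed
    qed (use C0 in auto)
  qed
  have "card Q \<le> card (\<Union>e\<in>E. (\<lambda>c. (c + e, c)) ` A e)"
    using sub finE finA by (intro card_mono) auto
  also have "\<dots> \<le> (\<Sum>e\<in>E. card ((\<lambda>c. (c + e, c)) ` A e))" using finE by (rule card_UN_le)
  also have "\<dots> \<le> (\<Sum>e\<in>E. card (A e))" by (intro sum_mono card_image_le finA)
  finally have "real (card Q) \<le> (\<Sum>e\<in>E. real (card (A e)))" by (metis of_nat_le_iff of_nat_sum)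
  also have "\<dots> \<le> (\<Sum>e\<in>E. 2 * C0 / (\<kappa> * \<bar>real_of_int e\<bar>) + 1)" by (intro sum_mono cardA)
  also have "\<dots> = (\<Sum>e\<in>E1. 2 * C0 / (\<kappa> * \<bar>real_of_int e\<bar>) + 1) + (\<Sum>e\<in>uminus ` E1. 2 * C0 / (\<kappa> * \<bar>real_of_int e\<bar>) + 1)"
    unfolding E_def using finE1 by (intro sum.union_disjoint) (auto simp: E1_def)
  also have "(\<Sum>e\<in>uminus ` E1. 2 * C0 / (\<kappa> * \<bar>real_of_int e\<bar>) + 1) = (\<Sum>e\<in>E1. 2 * C0 / (\<kappa> * \<bar>real_of_int e\<bar>) + 1)"
    by (subst sum.reindex) (auto simp: inj_on_def)
  also have "(\<Sum>e\<in>E1. 2 * C0 / (\<kappa> * \<bar>real_of_int e\<bar>) + 1) = 2 * C0 / \<kappa> * (\<Sum>e\<in>E1. 1 / real_of_int e) + 2 * real R"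
  proof -
    have "(\<Sum>e\<in>E1. 2 * C0 / (\<kappa> * \<bar>real_of_int e\<bar>) + 1) = (\<Sum>e\<in>E1. 2 * C0 / \<kappa> * (1 / real_of_int e) + 1)"
      by (intro sum.cong) (auto simp: E1_def)
    also have "\<dots> = 2 * C0 / \<kappa> * (\<Sum>e\<in>E1. 1 / real_of_int e) + real (card E1)"
      by (simp add: sum.distrib sum_distrib_left)
    also have "card E1 = 2 * R" unfolding E1_def by simp
    finally show ?thesis by simp
  qed
  finally have s1: "real (card Q) \<le> 2 * (2 * C0 / \<kappa> * (\<Sum>e\<in>E1. 1 / real_of_int e) + 2 * real R)" by simp
  have hs: "(\<Sum>e\<in>E1. 1 / real_of_int e) \<le> real (2 * R) powr (\<alpha> - 1) / (\<alpha> - 1)"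
    using harm_int[of "\<alpha> - 1" "2 * R"] a unfolding E1_def by simp
  have p2: "real (2 * R) powr (\<alpha> - 1) \<le> 2 * real R powr (\<alpha> - 1)"
  proof -
    have "real (2 * R) powr (\<alpha> - 1) = 2 powr (\<alpha> - 1) * real R powr (\<alpha> - 1)" by (simp add: powr_mult)
    moreover have "2 powr (\<alpha> - 1) \<le> 2 powr 1" using a by (intro powr_mono) auto
    ultimately show ?thesis by (simp add: mult_right_mono)
  qed
  have "real (card Q) \<le> 2 * (2 * C0 / \<kappa> * (2 * real R powr (\<alpha> - 1) / (\<alpha> - 1)) + 2 * real R)"
  proof -
    have "(\<Sum>e\<in>E1. 1 / real_of_int e) \<le> 2 * real R powr (\<alpha> - 1) / (\<alpha> - 1)"
      using hs p2 a by (smt (verit) divide_right_mono)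
    moreover have "0 \<le> 2 * C0 / \<kappa>" using C0 kp by simp
    ultimately show ?thesis using s1 by (smt (verit) mult_left_mono)
  qed
  also have "\<dots> = 4 * real R + 8 * C0 / (kap0 \<alpha> * (\<alpha> - 1)) * (real R powr (\<alpha> - 1) / real R powr (\<alpha> - 2))"
    unfolding \<kappa>_def using a k0 R by (simp add: field_simps)
  also have "real R powr (\<alpha> - 1) / real R powr (\<alpha> - 2) = real R"
    using R by (simp add: powr_diff[symmetric])
  finally show ?thesis unfolding Q_def C1_def by (simp add: algebra_simps)
qed


type_synonym quad = "int \<times> int \<times> int \<times> int"

definition co :: "nat \<Rightarrow> quad \<Rightarrow> int" where
  "co i q = (if i = 0 then fst q else if i = 1 then fst (snd q) else if i = 2 then fst (snd (snd q)) else snd (snd (snd q)))"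

lemma co_simps [simp]:
  "co 0 (k, k1, k2, k3) = k" "co 1 (k, k1, k2, k3) = k1" "co (Suc 0) (k, k1, k2, k3) = k1" "co 2 (k, k1, k2, k3) = k2" "co 3 (k, k1, k2, k3) = k3"
  by (simp_all add: co_def)

lemma co_eq: "co 0 u = co 0 w \<Longrightarrow> co 1 u = co 1 w \<Longrightarrow> co 2 u = co 2 w \<Longrightarrow> co 3 u = co 3 w \<Longrightarrow> u = w"
  by (cases u; cases w) simp

lemma SsetD:
  assumes "q \<in> Sset \<alpha> C0 m N N1 N2 N3"
  shows "co 0 q = co 1 q - co 2 q + co 3 q \<and> co 2 q \<noteq> co 1 q \<and> co 2 q \<noteq> co 3 q \<and>
    \<bar>PP \<alpha> (co 1 q) - PP \<alpha> (co 2 q) + PP \<alpha> (co 3 q) - PP \<alpha> (co 0 q) - m\<bar> \<le> C0 \<and>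
    \<bar>co 0 q\<bar> \<le> int N \<and> \<bar>co 1 q\<bar> \<le> int N1 \<and> \<bar>co 2 q\<bar> \<le> int N2 \<and> \<bar>co 3 q\<bar> \<le> int N3"
  using assms by (cases q) (simp add: Sset_def PP_def)

lemma finite_Sset: "finite (Sset \<alpha> C0 m N N1 N2 N3)"
proof (rule finite_subset)
  show "Sset \<alpha> C0 m N N1 N2 N3 \<subseteq> {- int N..int N} \<times> {- int N1..int N1} \<times> {- int N2..int N2} \<times> {- int N3..int N3}"
  proof
    fix q assume q: "q \<in> Sset \<alpha> C0 m N N1 N2 N3"
    obtain k k1 k2 k3 where qq: "q = (k, k1, k2, k3)" by (cases q) auto
    have "\<bar>k\<bar> \<le> int N" "\<bar>k1\<bar> \<le> int N1" "\<bar>k2\<bar> \<le> int N2" "\<bar>k3\<bar> \<le> int N3"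
      using SsetD[OF q] unfolding qq by auto
    then show "q \<in> {- int N..int N} \<times> {- int N1..int N1} \<times> {- int N2..int N2} \<times> {- int N3..int N3}"
      unfolding qq by (simp add: abs_le_iff)
  qed
qed auto

lemma finite_Bset: "finite (Bset \<alpha> C0 m N N1 N2 N3 j \<Gamma>)"
  by (rule finite_subset[OF _ finite_Sset]) (auto simp: Bset_def)

lemma card_W:
  fixes \<Gamma> :: real and M :: nat
  shows "card {z::int. \<Gamma> - 2 * real M < real_of_int \<bar>z\<bar> \<and> real_of_int \<bar>z\<bar> \<le> \<Gamma>} \<le> 4 * M"
proof -
  define f where "f = \<lfloor>\<Gamma>\<rfloor>"
  have sub: "{z::int. \<Gamma> - 2 * real M < real_of_int \<bar>z\<bar> \<and> real_of_int \<bar>z\<bar> \<le> \<Gamma>}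
      \<subseteq> {f - 2 * int M + 1..f} \<union> {- f..- f + 2 * int M - 1}"
  proof
    fix z assume z: "z \<in> {z::int. \<Gamma> - 2 * real M < real_of_int \<bar>z\<bar> \<and> real_of_int \<bar>z\<bar> \<le> \<Gamma>}"
    have a: "\<bar>z\<bar> \<le> f" using z unfolding f_def by (simp add: le_floor_iff)
    have b: "f - 2 * int M < \<bar>z\<bar>"
    proof -
      have "real_of_int f \<le> \<Gamma>" unfolding f_def by simp
      then have "real_of_int (f - 2 * int M) < real_of_int \<bar>z\<bar>" using z by simp
      then show ?thesis by linarith
    qed
    show "z \<in> {f - 2 * int M + 1..f} \<union> {- f..- f + 2 * int M - 1}" using a b by (cases "0 \<le> z") auto
  qed
  have "card {z::int. \<Gamma> - 2 * real M < real_of_int \<bar>z\<bar> \<and> real_of_int \<bar>z\<bar> \<le> \<Gamma>}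
       \<le> card ({f - 2 * int M + 1..f} \<union> {- f..- f + 2 * int M - 1})"
    using sub by (intro card_mono) auto
  also have "\<dots> \<le> card {f - 2 * int M + 1..f} + card {- f..- f + 2 * int M - 1}" by (rule card_Un_le)
  also have "\<dots> = 4 * M" by simp
  finally show ?thesis .
qed

lemma finite_W: "finite {z::int. \<Gamma> - 2 * real M < real_of_int \<bar>z\<bar> \<and> real_of_int \<bar>z\<bar> \<le> \<Gamma>}"
proof (rule finite_subset[of _ "{-\<lceil>\<Gamma>\<rceil>..\<lceil>\<Gamma>\<rceil>}"])
  show "{z::int. \<Gamma> - 2 * real M < real_of_int \<bar>z\<bar> \<and> real_of_int \<bar>z\<bar> \<le> \<Gamma>} \<subseteq> {-\<lceil>\<Gamma>\<rceil>..\<lceil>\<Gamma>\<rceil>}"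
  proof
    fix z assume "z \<in> {z::int. \<Gamma> - 2 * real M < real_of_int \<bar>z\<bar> \<and> real_of_int \<bar>z\<bar> \<le> \<Gamma>}"
    then have "real_of_int \<bar>z\<bar> \<le> \<Gamma>" by simp
    then have "\<bar>z\<bar> \<le> \<lceil>\<Gamma>\<rceil>" by linarith
    then show "z \<in> {-\<lceil>\<Gamma>\<rceil>..\<lceil>\<Gamma>\<rceil>}" by auto
  qed
qed auto

lemma med_bound:
  assumes "j \<in> {1, 2, 3}" "sel3 j N1 N2 N3 = nmax3 N1 N2 N3" "l \<in> {1, 2, 3}" "l \<noteq> j"
  shows "sel3 l N1 N2 N3 \<le> nmed3 N1 N2 N3"
  using assms unfolding sel3_def nmed3_def nmax3_def nmin3_def by (auto split: if_splits simp: max_def min_def)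

lemma min13_med: "min N1 N3 \<le> nmed3 N1 N2 N3"
  by (auto simp: nmed3_def nmax3_def nmin3_def max_def min_def)

lemma min_exists: "\<exists>i\<in>{1, 2, 3}. sel3 i N1 N2 N3 = nmin3 N1 N2 N3"
  by (auto simp: sel3_def nmin3_def min_def)

lemma med_ge1: "1 \<le> N1 \<Longrightarrow> 1 \<le> N2 \<Longrightarrow> 1 \<le> N3 \<Longrightarrow> 1 \<le> nmed3 N1 N2 N3"
  by (auto simp: nmed3_def nmax3_def nmin3_def max_def min_def)

lemma min_ge1: "1 \<le> N1 \<Longrightarrow> 1 \<le> N2 \<Longrightarrow> 1 \<le> N3 \<Longrightarrow> 1 \<le> nmin3 N1 N2 N3"
  by (auto simp: nmin3_def min_def)

lemma sel3_co: "j \<in> {1, 2, 3} \<Longrightarrow> sel3 j (co 1 q) (co 2 q) (co 3 q) = co j q"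
  by (auto simp: sel3_def)

lemma Qset_finite: "finite {(b, c). b \<noteq> c \<and> \<bar>b\<bar> \<le> int R \<and> \<bar>c\<bar> \<le> int R \<and> P b c}"
  by (rule finite_subset[of _ "{- int R..int R} \<times> {- int R..int R}"]) auto

lemma bounded_slice:
  fixes R :: nat
  assumes a: "1 < \<alpha>" "\<alpha> < 2" and C0: "0 \<le> C0" and R: "1 \<le> R" and i: "i \<le> 3"
    and T: "T \<subseteq> {q \<in> Sset \<alpha> C0 m N N1 N2 N3. co i q = v \<and> \<bar>co 0 q\<bar> \<le> int R \<and> \<bar>co 1 q\<bar> \<le> int R \<and> \<bar>co 2 q\<bar> \<le> int R \<and> \<bar>co 3 q\<bar> \<le> int R}"
  shows "real (card T) \<le> C1 \<alpha> C0 * real R"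
proof -
  have mem: "co 0 q = co 1 q - co 2 q + co 3 q \<and> co 2 q \<noteq> co 1 q \<and> co 2 q \<noteq> co 3 q \<and>
    \<bar>PP \<alpha> (co 1 q) - PP \<alpha> (co 2 q) + PP \<alpha> (co 3 q) - PP \<alpha> (co 0 q) - m\<bar> \<le> C0 \<and>
    co i q = v \<and> \<bar>co 0 q\<bar> \<le> int R \<and> \<bar>co 1 q\<bar> \<le> int R \<and> \<bar>co 2 q\<bar> \<le> int R \<and> \<bar>co 3 q\<bar> \<le> int R" if "q \<in> T" for q
    using T that SsetD[of q \<alpha> C0 m N N1 N2 N3] by blast
  have main: "card T \<le> card {(b, c). b \<noteq> c \<and> \<bar>b\<bar> \<le> int R \<and> \<bar>c\<bar> \<le> int R \<and>
            \<bar>PP \<alpha> a + PP \<alpha> b - PP \<alpha> c - PP \<alpha> (a + b - c) - m'\<bar> \<le> C0}"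
    if inj: "inj_on f T" and img: "\<forall>q\<in>T. f q \<in> {(b, c). b \<noteq> c \<and> \<bar>b\<bar> \<le> int R \<and> \<bar>c\<bar> \<le> int R \<and>
            \<bar>PP \<alpha> a + PP \<alpha> b - PP \<alpha> c - PP \<alpha> (a + b - c) - m'\<bar> \<le> C0}" for f a m'
    using inj img by (intro card_inj_on_le Qset_finite) auto
  have fin: "real (card T) \<le> C1 \<alpha> C0 * real R" if "card T \<le> card {(b, c). b \<noteq> c \<and> \<bar>b\<bar> \<le> int R \<and> \<bar>c\<bar> \<le> int R \<and>
            \<bar>PP \<alpha> a + PP \<alpha> b - PP \<alpha> c - PP \<alpha> (a + b - c) - m'\<bar> \<le> C0}" for a m'
    using that Q_bound[OF a C0 R, of a m'] by linarith
  consider "i = 0" | "i = 1" | "i = 2" | "i = 3" using i by linarith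
  then show ?thesis
  proof cases
    case 1
    show ?thesis
    proof (rule fin[OF main[of "\<lambda>q. (co 2 q, co 1 q)" v "- m"]])
      show "inj_on (\<lambda>q. (co 2 q, co 1 q)) T"
      proof (rule inj_onI)
        fix u w assume "u \<in> T" "w \<in> T" "(co 2 u, co 1 u) = (co 2 w, co 1 w)"
        then show "u = w" using mem[of u] mem[of w] 1 by (intro co_eq) auto
      qed
      show "\<forall>q\<in>T. (co 2 q, co 1 q) \<in> {(bb, cc). bb \<noteq> cc \<and> \<bar>bb\<bar> \<le> int R \<and> \<bar>cc\<bar> \<le> int R \<and> \<bar>PP \<alpha> v + PP \<alpha> bb - PP \<alpha> cc - PP \<alpha> (v + bb - cc) - - m\<bar> \<le> C0}"
      proof
        fix q assume q: "q \<in> T"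
        have r: "co 0 q = co 1 q - co 2 q + co 3 q" and n1: "co 2 q \<noteq> co 1 q" and n2: "co 2 q \<noteq> co 3 q"
          and P: "\<bar>PP \<alpha> (co 1 q) - PP \<alpha> (co 2 q) + PP \<alpha> (co 3 q) - PP \<alpha> (co 0 q) - m\<bar> \<le> C0"
          and vq: "co i q = v" and b0: "\<bar>co 0 q\<bar> \<le> int R" and b1: "\<bar>co 1 q\<bar> \<le> int R"
          and b2: "\<bar>co 2 q\<bar> \<le> int R" and b3: "\<bar>co 3 q\<bar> \<le> int R"
          using mem[OF q] by blast+
        have vq': "co 0 q = v" using vq 1 by simp
        have e: "v + co 2 q - co 1 q = co 3 q" using r vq' by linarith
        have xx0: "PP \<alpha> (v + co 2 q - co 1 q) = PP \<alpha> (co 3 q)" using e by simp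
        have xx1: "PP \<alpha> v = PP \<alpha> (co 0 q)" using vq' by simp
        have x: "PP \<alpha> v + PP \<alpha> (co 2 q) - PP \<alpha> (co 1 q) - PP \<alpha> (v + co 2 q - co 1 q) - (- m) = - (PP \<alpha> (co 1 q) - PP \<alpha> (co 2 q) + PP \<alpha> (co 3 q) - PP \<alpha> (co 0 q) - m)"
          unfolding xx0 xx1 by simp
        have ne: "co 2 q \<noteq> co 1 q" using n1 n2 r by auto
        have "\<bar>PP \<alpha> v + PP \<alpha> (co 2 q) - PP \<alpha> (co 1 q) - PP \<alpha> (v + co 2 q - co 1 q) - (- m)\<bar> \<le> C0"
          unfolding x using P by simp
        then show "(co 2 q, co 1 q) \<in> {(bb, cc). bb \<noteq> cc \<and> \<bar>bb\<bar> \<le> int R \<and> \<bar>cc\<bar> \<le> int R \<and> \<bar>PP \<alpha> v + PP \<alpha> bb - PP \<alpha> cc - PP \<alpha> (v + bb - cc) - - m\<bar> \<le> C0}"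
          using ne b0 b1 b2 b3 by simp
      qed
    qed
  next
    case 2
    show ?thesis
    proof (rule fin[OF main[of "\<lambda>q. (co 3 q, co 2 q)" v "m"]])
      show "inj_on (\<lambda>q. (co 3 q, co 2 q)) T"
      proof (rule inj_onI)
        fix u w assume "u \<in> T" "w \<in> T" "(co 3 u, co 2 u) = (co 3 w, co 2 w)"
        then show "u = w" using mem[of u] mem[of w] 2 by (intro co_eq) auto
      qed
      show "\<forall>q\<in>T. (co 3 q, co 2 q) \<in> {(bb, cc). bb \<noteq> cc \<and> \<bar>bb\<bar> \<le> int R \<and> \<bar>cc\<bar> \<le> int R \<and> \<bar>PP \<alpha> v + PP \<alpha> bb - PP \<alpha> cc - PP \<alpha> (v + bb - cc) - m\<bar> \<le> C0}"
      proof
        fix q assume q: "q \<in> T"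
        have r: "co 0 q = co 1 q - co 2 q + co 3 q" and n1: "co 2 q \<noteq> co 1 q" and n2: "co 2 q \<noteq> co 3 q"
          and P: "\<bar>PP \<alpha> (co 1 q) - PP \<alpha> (co 2 q) + PP \<alpha> (co 3 q) - PP \<alpha> (co 0 q) - m\<bar> \<le> C0"
          and vq: "co i q = v" and b0: "\<bar>co 0 q\<bar> \<le> int R" and b1: "\<bar>co 1 q\<bar> \<le> int R"
          and b2: "\<bar>co 2 q\<bar> \<le> int R" and b3: "\<bar>co 3 q\<bar> \<le> int R"
          using mem[OF q] by blast+
        have vq': "co 1 q = v" using vq 2 by simp
        have e: "v + co 3 q - co 2 q = co 0 q" using r vq' by linarith
        have xx0: "PP \<alpha> (v + co 3 q - co 2 q) = PP \<alpha> (co 0 q)" using e by simp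
        have xx1: "PP \<alpha> v = PP \<alpha> (co 1 q)" using vq' by simp
        have x: "PP \<alpha> v + PP \<alpha> (co 3 q) - PP \<alpha> (co 2 q) - PP \<alpha> (v + co 3 q - co 2 q) - (m) = PP \<alpha> (co 1 q) - PP \<alpha> (co 2 q) + PP \<alpha> (co 3 q) - PP \<alpha> (co 0 q) - m"
          unfolding xx0 xx1 by simp
        have ne: "co 3 q \<noteq> co 2 q" using n1 n2 r by auto
        have "\<bar>PP \<alpha> v + PP \<alpha> (co 3 q) - PP \<alpha> (co 2 q) - PP \<alpha> (v + co 3 q - co 2 q) - (m)\<bar> \<le> C0"
          unfolding x using P by simp
        then show "(co 3 q, co 2 q) \<in> {(bb, cc). bb \<noteq> cc \<and> \<bar>bb\<bar> \<le> int R \<and> \<bar>cc\<bar> \<le> int R \<and> \<bar>PP \<alpha> v + PP \<alpha> bb - PP \<alpha> cc - PP \<alpha> (v + bb - cc) - m\<bar> \<le> C0}"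
          using ne b0 b1 b2 b3 by simp
      qed
    qed
  next
    case 3
    show ?thesis
    proof (rule fin[OF main[of "\<lambda>q. (co 0 q, co 1 q)" v "- m"]])
      show "inj_on (\<lambda>q. (co 0 q, co 1 q)) T"
      proof (rule inj_onI)
        fix u w assume "u \<in> T" "w \<in> T" "(co 0 u, co 1 u) = (co 0 w, co 1 w)"
        then show "u = w" using mem[of u] mem[of w] 3 by (intro co_eq) auto
      qed
      show "\<forall>q\<in>T. (co 0 q, co 1 q) \<in> {(bb, cc). bb \<noteq> cc \<and> \<bar>bb\<bar> \<le> int R \<and> \<bar>cc\<bar> \<le> int R \<and> \<bar>PP \<alpha> v + PP \<alpha> bb - PP \<alpha> cc - PP \<alpha> (v + bb - cc) - - m\<bar> \<le> C0}"
      proof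
        fix q assume q: "q \<in> T"
        have r: "co 0 q = co 1 q - co 2 q + co 3 q" and n1: "co 2 q \<noteq> co 1 q" and n2: "co 2 q \<noteq> co 3 q"
          and P: "\<bar>PP \<alpha> (co 1 q) - PP \<alpha> (co 2 q) + PP \<alpha> (co 3 q) - PP \<alpha> (co 0 q) - m\<bar> \<le> C0"
          and vq: "co i q = v" and b0: "\<bar>co 0 q\<bar> \<le> int R" and b1: "\<bar>co 1 q\<bar> \<le> int R"
          and b2: "\<bar>co 2 q\<bar> \<le> int R" and b3: "\<bar>co 3 q\<bar> \<le> int R"
          using mem[OF q] by blast+
        have vq': "co 2 q = v" using vq 3 by simp
        have e: "v + co 0 q - co 1 q = co 3 q" using r vq' by linarith
        have xx0: "PP \<alpha> (v + co 0 q - co 1 q) = PP \<alpha> (co 3 q)" using e by simp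
        have xx1: "PP \<alpha> v = PP \<alpha> (co 2 q)" using vq' by simp
        have x: "PP \<alpha> v + PP \<alpha> (co 0 q) - PP \<alpha> (co 1 q) - PP \<alpha> (v + co 0 q - co 1 q) - (- m) = - (PP \<alpha> (co 1 q) - PP \<alpha> (co 2 q) + PP \<alpha> (co 3 q) - PP \<alpha> (co 0 q) - m)"
          unfolding xx0 xx1 by simp
        have ne: "co 0 q \<noteq> co 1 q" using n1 n2 r by auto
        have "\<bar>PP \<alpha> v + PP \<alpha> (co 0 q) - PP \<alpha> (co 1 q) - PP \<alpha> (v + co 0 q - co 1 q) - (- m)\<bar> \<le> C0"
          unfolding x using P by simp
        then show "(co 0 q, co 1 q) \<in> {(bb, cc). bb \<noteq> cc \<and> \<bar>bb\<bar> \<le> int R \<and> \<bar>cc\<bar> \<le> int R \<and> \<bar>PP \<alpha> v + PP \<alpha> bb - PP \<alpha> cc - PP \<alpha> (v + bb - cc) - - m\<bar> \<le> C0}"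
          using ne b0 b1 b2 b3 by simp
      qed
    qed
  next
    case 4
    show ?thesis
    proof (rule fin[OF main[of "\<lambda>q. (co 1 q, co 2 q)" v "m"]])
      show "inj_on (\<lambda>q. (co 1 q, co 2 q)) T"
      proof (rule inj_onI)
        fix u w assume "u \<in> T" "w \<in> T" "(co 1 u, co 2 u) = (co 1 w, co 2 w)"
        then show "u = w" using mem[of u] mem[of w] 4 by (intro co_eq) auto
      qed
      show "\<forall>q\<in>T. (co 1 q, co 2 q) \<in> {(bb, cc). bb \<noteq> cc \<and> \<bar>bb\<bar> \<le> int R \<and> \<bar>cc\<bar> \<le> int R \<and> \<bar>PP \<alpha> v + PP \<alpha> bb - PP \<alpha> cc - PP \<alpha> (v + bb - cc) - m\<bar> \<le> C0}"
      proof
        fix q assume q: "q \<in> T"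
        have r: "co 0 q = co 1 q - co 2 q + co 3 q" and n1: "co 2 q \<noteq> co 1 q" and n2: "co 2 q \<noteq> co 3 q"
          and P: "\<bar>PP \<alpha> (co 1 q) - PP \<alpha> (co 2 q) + PP \<alpha> (co 3 q) - PP \<alpha> (co 0 q) - m\<bar> \<le> C0"
          and vq: "co i q = v" and b0: "\<bar>co 0 q\<bar> \<le> int R" and b1: "\<bar>co 1 q\<bar> \<le> int R"
          and b2: "\<bar>co 2 q\<bar> \<le> int R" and b3: "\<bar>co 3 q\<bar> \<le> int R"
          using mem[OF q] by blast+
        have vq': "co 3 q = v" using vq 4 by simp
        have e: "v + co 1 q - co 2 q = co 0 q" using r vq' by linarith
        have xx0: "PP \<alpha> (v + co 1 q - co 2 q) = PP \<alpha> (co 0 q)" using e by simp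
        have xx1: "PP \<alpha> v = PP \<alpha> (co 3 q)" using vq' by simp
        have x: "PP \<alpha> v + PP \<alpha> (co 1 q) - PP \<alpha> (co 2 q) - PP \<alpha> (v + co 1 q - co 2 q) - (m) = PP \<alpha> (co 1 q) - PP \<alpha> (co 2 q) + PP \<alpha> (co 3 q) - PP \<alpha> (co 0 q) - m"
          unfolding xx0 xx1 by simp
        have ne: "co 1 q \<noteq> co 2 q" using n1 n2 r by auto
        have "\<bar>PP \<alpha> v + PP \<alpha> (co 1 q) - PP \<alpha> (co 2 q) - PP \<alpha> (v + co 1 q - co 2 q) - (m)\<bar> \<le> C0"
          unfolding x using P by simp
        then show "(co 1 q, co 2 q) \<in> {(bb, cc). bb \<noteq> cc \<and> \<bar>bb\<bar> \<le> int R \<and> \<bar>cc\<bar> \<le> int R \<and> \<bar>PP \<alpha> v + PP \<alpha> bb - PP \<alpha> cc - PP \<alpha> (v + bb - cc) - m\<bar> \<le> C0}"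
          using ne b0 b1 b2 b3 by simp
      qed
    qed
  qed
qed


definition sg :: "nat \<Rightarrow> int" where "sg l = (if l = 0 \<or> l = 2 then 1 else -1)"

lemma sum4: "distinct [a, b, c, i] \<Longrightarrow> (\<Sum>l\<in>{a, b, c, i}. f l) = f a + f b + f c + (f i :: 'b :: comm_monoid_add)"
  by (simp add: add.assoc)

lemma rel_sum: "q \<in> Sset \<alpha> C0 m N N1 N2 N3 \<Longrightarrow> (\<Sum>l\<in>{0, 1, 2, 3}. sg l * co l q) = 0"
  using SsetD[of q] by (simp add: sg_def)

lemma phi_sum: "q \<in> Sset \<alpha> C0 m N N1 N2 N3 \<Longrightarrow> \<bar>(\<Sum>l\<in>{0, 1, 2, 3}. - real_of_int (sg l) * PP \<alpha> (co l q)) - m\<bar> \<le> C0"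
proof -
  assume q: "q \<in> Sset \<alpha> C0 m N N1 N2 N3"
  have "(\<Sum>l\<in>{0::nat, 1, 2, 3}. - real_of_int (sg l) * PP \<alpha> (co l q)) = PP \<alpha> (co 1 q) - PP \<alpha> (co 2 q) + PP \<alpha> (co 3 q) - PP \<alpha> (co 0 q)"
    by (simp add: sg_def)
  moreover have P: "\<bar>PP \<alpha> (co 1 q) - PP \<alpha> (co 2 q) + PP \<alpha> (co 3 q) - PP \<alpha> (co 0 q) - m\<bar> \<le> C0"
    using SsetD[OF q] by blast
  ultimately show ?thesis by simp
qed

lemma sg_abs: "\<bar>sg l\<bar> = 1" by (simp add: sg_def)

lemma perm_fiber:
  fixes M G :: real and I :: "int set" and a b c i :: nat
  assumes a1: "1 \<le> \<alpha>" and G: "0 < G" and M: "1 \<le> M" and GM: "2 * \<alpha> * M powr (\<alpha> - 1) \<le> G powr (\<alpha> - 1)"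
    and finT: "finite T" and finI: "finite I" and C0: "0 \<le> C0"
    and dst: "distinct [a, b, c, i]" and perm: "{a, b, c, i} = {0, 1, 2, 3}"
    and T: "T \<subseteq> {q \<in> Sset \<alpha> C0 m N N1 N2 N3. co i q = v}"
    and H: "\<forall>q\<in>T. G \<le> \<bar>co a q\<bar> \<and> \<bar>co b q\<bar> \<le> M \<and> co c q \<in> I"
  shows "real (card T) \<le> real (card I) * (4 * C0 + 2)"
proof (rule large_fiber[where ?x1.0="co a" and ?x2.0="co b" and idx="co c" and ?e1.0="- real_of_int (sg a)"
      and ?e2.0="- real_of_int (sg b)" and \<rho>="\<lambda>u. - real_of_int (sg c) * PP \<alpha> (co c u) - real_of_int (sg i) * PP \<alpha> (co i u) - m"
      and G=G and M=M])
  have S: "(\<Sum>l\<in>{0, 1, 2, 3}. f l) = f a + f b + f c + (f i :: 'b :: comm_monoid_add)" for f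
    using sum4[OF dst, of f] perm by simp
  show "\<bar>- real_of_int (sg a)\<bar> = 1" "\<bar>- real_of_int (sg b)\<bar> = 1" by (simp_all add: sg_def)
  show "\<forall>u\<in>T. \<forall>w\<in>T. co c u = co c w \<longrightarrow> \<bar>co a u - co a w\<bar> = \<bar>co b u - co b w\<bar>"
  proof (intro ballI impI)
    fix u w assume u: "u \<in> T" and w: "w \<in> T" and cc: "co c u = co c w"
    have ii: "co i u = co i w" using T u w by auto
    have "(\<Sum>l\<in>{0, 1, 2, 3}. sg l * co l u) = 0" "(\<Sum>l\<in>{0, 1, 2, 3}. sg l * co l w) = 0"
      using T u w rel_sum by blast+
    then have "sg a * co a u + sg b * co b u + sg c * co c u + sg i * co i u = 0"
      "sg a * co a w + sg b * co b w + sg c * co c w + sg i * co i w = 0" using S by metis+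
    then have "sg a * (co a u - co a w) = - (sg b * (co b u - co b w))" using cc ii by (simp add: algebra_simps)
    then have "\<bar>sg a\<bar> * \<bar>co a u - co a w\<bar> = \<bar>sg b\<bar> * \<bar>co b u - co b w\<bar>" by (metis abs_minus_cancel abs_mult)
    then show "\<bar>co a u - co a w\<bar> = \<bar>co b u - co b w\<bar>" by (simp add: sg_abs)
  qed
  show "\<forall>u\<in>T. \<forall>w\<in>T. co c u = co c w \<longrightarrow> co a u = co a w \<longrightarrow> u = w"
  proof (intro ballI impI)
    fix u w assume u: "u \<in> T" and w: "w \<in> T" and cc: "co c u = co c w" and aa: "co a u = co a w"
    have ii: "co i u = co i w" using T u w by auto
    have "(\<Sum>l\<in>{0, 1, 2, 3}. sg l * co l u) = 0" "(\<Sum>l\<in>{0, 1, 2, 3}. sg l * co l w) = 0"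
      using T u w rel_sum by blast+
    then have "sg a * co a u + sg b * co b u + sg c * co c u + sg i * co i u = 0"
      "sg a * co a w + sg b * co b w + sg c * co c w + sg i * co i w = 0" using S by metis+
    then have "sg a * co a w + sg b * co b u + sg c * co c w + sg i * co i w = 0"
      "sg a * co a w + sg b * co b w + sg c * co c w + sg i * co i w = 0" using cc ii aa by simp_all
    then have "sg b * co b u = sg b * co b w" by linarith
    moreover have "sg b \<noteq> 0" using sg_abs[of b] by auto
    ultimately have bb: "co b u = co b w" by simp
    have "\<forall>l\<in>{a, b, c, i}. co l u = co l w" using aa bb cc ii by auto
    then have "\<forall>l\<in>{0, 1, 2, 3}. co l u = co l w" using perm by simp
    then show "u = w" by (intro co_eq) auto
  qed
  show "\<forall>u\<in>T. G \<le> real_of_int \<bar>co a u\<bar> \<and> real_of_int \<bar>co b u\<bar> \<le> M \<and> co c u \<in> I" using H by auto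
  show "\<forall>u\<in>T. \<bar>- real_of_int (sg a) * PP \<alpha> (co a u) + - real_of_int (sg b) * PP \<alpha> (co b u) +
        (- real_of_int (sg c) * PP \<alpha> (co c u) - real_of_int (sg i) * PP \<alpha> (co i u) - m)\<bar> \<le> C0"
  proof
    fix u assume u: "u \<in> T"
    have "\<bar>(\<Sum>l\<in>{0, 1, 2, 3}. - real_of_int (sg l) * PP \<alpha> (co l u)) - m\<bar> \<le> C0"
      using T u phi_sum by blast
    then show "\<bar>- real_of_int (sg a) * PP \<alpha> (co a u) + - real_of_int (sg b) * PP \<alpha> (co b u) +
        (- real_of_int (sg c) * PP \<alpha> (co c u) - real_of_int (sg i) * PP \<alpha> (co i u) - m)\<bar> \<le> C0"
      unfolding S by (simp add: algebra_simps)
  qed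
  show "\<forall>u\<in>T. \<forall>w\<in>T. co c u = co c w \<longrightarrow>
      - real_of_int (sg c) * PP \<alpha> (co c u) - real_of_int (sg i) * PP \<alpha> (co i u) - m =
      - real_of_int (sg c) * PP \<alpha> (co c w) - real_of_int (sg i) * PP \<alpha> (co i w) - m"
  proof (intro ballI impI)
    fix u w assume u: "u \<in> T" and w: "w \<in> T" and cc: "co c u = co c w"
    have "co i u = v" "co i w = v" using T u w by blast+
    then show "- real_of_int (sg c) * PP \<alpha> (co c u) - real_of_int (sg i) * PP \<alpha> (co i u) - m =
      - real_of_int (sg c) * PP \<alpha> (co c w) - real_of_int (sg i) * PP \<alpha> (co i w) - m" using cc by simp
  qed
qed (use assms in auto)


lemma card_sym_int: "card {- int M..int M} = 2 * M + 1"
  by simp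

lemma large_slice:
  fixes M :: nat and G :: real and W :: "int set"
  assumes a1: "1 \<le> \<alpha>" and C0: "0 \<le> C0" and M: "1 \<le> M" and G: "0 < G"
    and GM: "2 * \<alpha> * real M powr (\<alpha> - 1) \<le> G powr (\<alpha> - 1)"
    and j: "j \<in> {1, 2, 3}" and i: "i \<le> 3" and finT: "finite T" and finW: "finite W" and cW: "card W \<le> 4 * M"
    and T: "T \<subseteq> {q \<in> Sset \<alpha> C0 m N N1 N2 N3. co i q = v}"
    and big: "\<forall>q\<in>T. G \<le> \<bar>co 0 q\<bar> \<and> G \<le> \<bar>co j q\<bar> \<and> co j q \<in> W \<and> (\<forall>l\<in>{1, 2, 3}. l \<noteq> j \<longrightarrow> \<bar>co l q\<bar> \<le> int M)"
  shows "real (card T) \<le> 4 * real M * (4 * C0 + 2)"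
proof -
  have gen: "real (card T) \<le> 4 * real M * (4 * C0 + 2)"
    if d: "distinct [a, b, c, i]" and p: "{a, b, c, i} = {0, 1, 2, 3}"
      and h: "\<forall>q\<in>T. G \<le> \<bar>co a q\<bar> \<and> \<bar>co b q\<bar> \<le> int M \<and> co c q \<in> I" and fI: "finite I" and cI: "card I \<le> 4 * M"
    for a b c I
  proof -
    have h': "\<forall>q\<in>T. G \<le> real_of_int \<bar>co a q\<bar> \<and> real_of_int \<bar>co b q\<bar> \<le> real M \<and> co c q \<in> I"
    proof
      fix q assume "q \<in> T"
      then have "G \<le> \<bar>co a q\<bar>" "\<bar>co b q\<bar> \<le> int M" "co c q \<in> I" using h by auto
      moreover have "real_of_int \<bar>co b q\<bar> \<le> real M" using \<open>\<bar>co b q\<bar> \<le> int M\<close> by linarith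
      ultimately show "G \<le> real_of_int \<bar>co a q\<bar> \<and> real_of_int \<bar>co b q\<bar> \<le> real M \<and> co c q \<in> I" by simp
    qed
    have "real (card T) \<le> real (card I) * (4 * C0 + 2)"
      using M by (intro perm_fiber[OF a1 G _ GM finT fI C0 d p T h']) auto
    also have "\<dots> \<le> real (4 * M) * (4 * C0 + 2)" using cI C0 by (intro mult_right_mono) auto
    finally show ?thesis by simp
  qed
  have cs: "card {- int M..int M} \<le> 4 * M" using M by simp
  consider "j = 1" | "j = 2" | "j = 3" using j by auto
  then show ?thesis
  proof cases
    case 1
    consider "i = 0" | "i = 1" | "i = 2" | "i = 3" using i by linarith
    then show ?thesis
    proof cases
      case 1
      show ?thesis
      proof (rule gen[of 1 3 2 "{- int M..int M}"])
        show "distinct [1, 3, 2, i]" "{1, 3, 2, i} = {0, 1, 2, 3}" using 1 by auto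
        show "\<forall>q\<in>T. G \<le> \<bar>co 1 q\<bar> \<and> \<bar>co 3 q\<bar> \<le> int M \<and> co 2 q \<in> {- int M..int M}"
          using big \<open>j = 1\<close> by auto
        show "finite ({- int M..int M})" by (simp)
        show "card ({- int M..int M}) \<le> 4 * M" by (rule cs)
      qed
    next
      case 2
      show ?thesis
      proof (rule gen[of 0 3 2 "{- int M..int M}"])
        show "distinct [0, 3, 2, i]" "{0, 3, 2, i} = {0, 1, 2, 3}" using 2 by auto
        show "\<forall>q\<in>T. G \<le> \<bar>co 0 q\<bar> \<and> \<bar>co 3 q\<bar> \<le> int M \<and> co 2 q \<in> {- int M..int M}"
          using big \<open>j = 1\<close> by auto
        show "finite ({- int M..int M})" by (simp)
        show "card ({- int M..int M}) \<le> 4 * M" by (rule cs)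
      qed
    next
      case 3
      show ?thesis
      proof (rule gen[of 0 3 1 "W"])
        show "distinct [0, 3, 1, i]" "{0, 3, 1, i} = {0, 1, 2, 3}" using 3 by auto
        show "\<forall>q\<in>T. G \<le> \<bar>co 0 q\<bar> \<and> \<bar>co 3 q\<bar> \<le> int M \<and> co 1 q \<in> W"
          using big \<open>j = 1\<close> by auto
        show "finite (W)" by (rule finW)
        show "card (W) \<le> 4 * M" by (rule cW)
      qed
    next
      case 4
      show ?thesis
      proof (rule gen[of 0 2 1 "W"])
        show "distinct [0, 2, 1, i]" "{0, 2, 1, i} = {0, 1, 2, 3}" using 4 by auto
        show "\<forall>q\<in>T. G \<le> \<bar>co 0 q\<bar> \<and> \<bar>co 2 q\<bar> \<le> int M \<and> co 1 q \<in> W"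
          using big \<open>j = 1\<close> by auto
        show "finite (W)" by (rule finW)
        show "card (W) \<le> 4 * M" by (rule cW)
      qed
    qed
  next
    case 2
    consider "i = 0" | "i = 1" | "i = 2" | "i = 3" using i by linarith
    then show ?thesis
    proof cases
      case 1
      show ?thesis
      proof (rule gen[of 2 3 1 "{- int M..int M}"])
        show "distinct [2, 3, 1, i]" "{2, 3, 1, i} = {0, 1, 2, 3}" using 1 by auto
        show "\<forall>q\<in>T. G \<le> \<bar>co 2 q\<bar> \<and> \<bar>co 3 q\<bar> \<le> int M \<and> co 1 q \<in> {- int M..int M}"
          using big \<open>j = 2\<close> by auto
        show "finite ({- int M..int M})" by (simp)
        show "card ({- int M..int M}) \<le> 4 * M" by (rule cs)
      qed
    next
      case 2
      show ?thesis
      proof (rule gen[of 0 3 2 "W"])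
        show "distinct [0, 3, 2, i]" "{0, 3, 2, i} = {0, 1, 2, 3}" using 2 by auto
        show "\<forall>q\<in>T. G \<le> \<bar>co 0 q\<bar> \<and> \<bar>co 3 q\<bar> \<le> int M \<and> co 2 q \<in> W"
          using big \<open>j = 2\<close> by auto
        show "finite (W)" by (rule finW)
        show "card (W) \<le> 4 * M" by (rule cW)
      qed
    next
      case 3
      show ?thesis
      proof (rule gen[of 0 3 1 "{- int M..int M}"])
        show "distinct [0, 3, 1, i]" "{0, 3, 1, i} = {0, 1, 2, 3}" using 3 by auto
        show "\<forall>q\<in>T. G \<le> \<bar>co 0 q\<bar> \<and> \<bar>co 3 q\<bar> \<le> int M \<and> co 1 q \<in> {- int M..int M}"
          using big \<open>j = 2\<close> by auto
        show "finite ({- int M..int M})" by (simp)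
        show "card ({- int M..int M}) \<le> 4 * M" by (rule cs)
      qed
    next
      case 4
      show ?thesis
      proof (rule gen[of 0 1 2 "W"])
        show "distinct [0, 1, 2, i]" "{0, 1, 2, i} = {0, 1, 2, 3}" using 4 by auto
        show "\<forall>q\<in>T. G \<le> \<bar>co 0 q\<bar> \<and> \<bar>co 1 q\<bar> \<le> int M \<and> co 2 q \<in> W"
          using big \<open>j = 2\<close> by auto
        show "finite (W)" by (rule finW)
        show "card (W) \<le> 4 * M" by (rule cW)
      qed
    qed
  next
    case 3
    consider "i = 0" | "i = 1" | "i = 2" | "i = 3" using i by linarith
    then show ?thesis
    proof cases
      case 1
      show ?thesis
      proof (rule gen[of 3 1 2 "{- int M..int M}"])
        show "distinct [3, 1, 2, i]" "{3, 1, 2, i} = {0, 1, 2, 3}" using 1 by auto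
        show "\<forall>q\<in>T. G \<le> \<bar>co 3 q\<bar> \<and> \<bar>co 1 q\<bar> \<le> int M \<and> co 2 q \<in> {- int M..int M}"
          using big \<open>j = 3\<close> by auto
        show "finite ({- int M..int M})" by (simp)
        show "card ({- int M..int M}) \<le> 4 * M" by (rule cs)
      qed
    next
      case 2
      show ?thesis
      proof (rule gen[of 0 2 3 "W"])
        show "distinct [0, 2, 3, i]" "{0, 2, 3, i} = {0, 1, 2, 3}" using 2 by auto
        show "\<forall>q\<in>T. G \<le> \<bar>co 0 q\<bar> \<and> \<bar>co 2 q\<bar> \<le> int M \<and> co 3 q \<in> W"
          using big \<open>j = 3\<close> by auto
        show "finite (W)" by (rule finW)
        show "card (W) \<le> 4 * M" by (rule cW)
      qed
    next
      case 3
      show ?thesis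
      proof (rule gen[of 0 1 3 "W"])
        show "distinct [0, 1, 3, i]" "{0, 1, 3, i} = {0, 1, 2, 3}" using 3 by auto
        show "\<forall>q\<in>T. G \<le> \<bar>co 0 q\<bar> \<and> \<bar>co 1 q\<bar> \<le> int M \<and> co 3 q \<in> W"
          using big \<open>j = 3\<close> by auto
        show "finite (W)" by (rule finW)
        show "card (W) \<le> 4 * M" by (rule cW)
      qed
    next
      case 4
      show ?thesis
      proof (rule gen[of 0 1 2 "{- int M..int M}"])
        show "distinct [0, 1, 2, i]" "{0, 1, 2, i} = {0, 1, 2, 3}" using 4 by auto
        show "\<forall>q\<in>T. G \<le> \<bar>co 0 q\<bar> \<and> \<bar>co 1 q\<bar> \<le> int M \<and> co 2 q \<in> {- int M..int M}"
          using big \<open>j = 3\<close> by auto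
        show "finite ({- int M..int M})" by (simp)
        show "card ({- int M..int M}) \<le> 4 * M" by (rule cs)
      qed
    qed
  qed
qed


lemma Bset_D:
  assumes q: "q \<in> Bset \<alpha> C0 m N N1 N2 N3 j \<Gamma>" and j: "j \<in> {1, 2, 3}"
  shows "q \<in> Sset \<alpha> C0 m N N1 N2 N3 \<and> real_of_int \<bar>co j q\<bar> \<le> \<Gamma> \<and> \<Gamma> < real_of_int \<bar>co 0 q\<bar>"
proof -
  obtain k k1 k2 k3 where qq: "q = (k, k1, k2, k3)" by (cases q) auto
  have "sel3 j k1 k2 k3 = co j q" using sel3_co[OF j, of q] unfolding qq by simp
  then show ?thesis using q unfolding qq Bset_def by auto
qed

lemma co_bound_sel:
  assumes "q \<in> Sset \<alpha> C0 m N N1 N2 N3" "l \<in> {1, 2, 3}"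
  shows "\<bar>co l q\<bar> \<le> int (sel3 l N1 N2 N3)"
  using SsetD[OF assms(1)] assms(2) by (auto simp: sel3_def)

lemma small_bound:
  assumes "q \<in> Sset \<alpha> C0 m N N1 N2 N3" "j \<in> {1, 2, 3}" "sel3 j N1 N2 N3 = nmax3 N1 N2 N3" "l \<in> {1, 2, 3}" "l \<noteq> j"
  shows "\<bar>co l q\<bar> \<le> int (nmed3 N1 N2 N3)"
proof -
  have "\<bar>co l q\<bar> \<le> int (sel3 l N1 N2 N3)" using assms by (intro co_bound_sel) auto
  also have "\<dots> \<le> int (nmed3 N1 N2 N3)" using med_bound[OF assms(2,3,4,5)] by simp
  finally show ?thesis .
qed

lemma k_bound:
  assumes q: "q \<in> Sset \<alpha> C0 m N N1 N2 N3" and j: "j \<in> {1, 2, 3}"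
    and sm: "\<forall>l\<in>{1, 2, 3}. l \<noteq> j \<longrightarrow> \<bar>co l q\<bar> \<le> M"
  shows "\<bar>co 0 q\<bar> \<le> \<bar>co j q\<bar> + 2 * M"
proof -
  have r: "co 0 q = co 1 q - co 2 q + co 3 q" using SsetD[OF q] by blast
  have t: "\<bar>co 0 q\<bar> \<le> \<bar>co 1 q\<bar> + \<bar>co 2 q\<bar> + \<bar>co 3 q\<bar>"
    unfolding r by (rule order_trans[OF abs_triangle_ineq]) (simp add: abs_triangle_ineq4)
  consider "j = 1" | "j = 2" | "j = 3" using j by auto
  then show ?thesis
  proof cases
    case 1
    have "\<bar>co 2 q\<bar> \<le> M" "\<bar>co 3 q\<bar> \<le> M" using sm 1 by auto
    then show ?thesis unfolding 1 using t by linarith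
  next
    case 2
    have "\<bar>co 1 q\<bar> \<le> M" "\<bar>co 3 q\<bar> \<le> M" using sm 2 by auto
    then show ?thesis unfolding 2 using t by linarith
  next
    case 3
    have "\<bar>co 1 q\<bar> \<le> M" "\<bar>co 2 q\<bar> \<le> M" using sm 3 by auto
    then show ?thesis unfolding 3 using t by linarith
  qed
qed

lemma conv0: "card {(k1, k2, k3). (k, k1, k2, k3) \<in> B} = card {q \<in> B. co 0 q = k}"
proof -
  have "{q \<in> B. co 0 q = k} = (\<lambda>(k1, k2, k3). (k, k1, k2, k3)) ` {(k1, k2, k3). (k, k1, k2, k3) \<in> B}"
  proof (intro equalityI subsetI)
    fix q assume q: "q \<in> {q \<in> B. co 0 q = k}"
    have "k = co 0 q" using q by simp
    then have e: "q = (\<lambda>(k1, k2, k3). (k, k1, k2, k3)) (co 1 q, co 2 q, co 3 q)" by (cases q) simp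
    have "(co 1 q, co 2 q, co 3 q) \<in> {(k1, k2, k3). (k, k1, k2, k3) \<in> B}" using q e by (cases q) simp
    then show "q \<in> (\<lambda>(k1, k2, k3). (k, k1, k2, k3)) ` {(k1, k2, k3). (k, k1, k2, k3) \<in> B}" using e by (rule rev_image_eqI)
  next
    fix q assume "q \<in> (\<lambda>(k1, k2, k3). (k, k1, k2, k3)) ` {(k1, k2, k3). (k, k1, k2, k3) \<in> B}"
    then show "q \<in> {q \<in> B. co 0 q = k}" by auto
  qed
  moreover have "inj_on (\<lambda>(k1, k2, k3). (k, k1, k2, k3)) {(k1, k2, k3). (k, k1, k2, k3) \<in> B}"
    by (auto simp: inj_on_def)
  ultimately show ?thesis by (simp add: card_image)
qed

lemma conv1: "card {(k, k2, k3). (k, k1, k2, k3) \<in> B} = card {q \<in> B. co 1 q = k1}"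
proof -
  have "{q \<in> B. co 1 q = k1} = (\<lambda>(k, k2, k3). (k, k1, k2, k3)) ` {(k, k2, k3). (k, k1, k2, k3) \<in> B}"
  proof (intro equalityI subsetI)
    fix q assume q: "q \<in> {q \<in> B. co 1 q = k1}"
    have "k1 = co 1 q" using q by simp
    then have e: "q = (\<lambda>(k, k2, k3). (k, k1, k2, k3)) (co 0 q, co 2 q, co 3 q)" by (cases q) simp
    have "(co 0 q, co 2 q, co 3 q) \<in> {(k, k2, k3). (k, k1, k2, k3) \<in> B}" using q e by (cases q) simp
    then show "q \<in> (\<lambda>(k, k2, k3). (k, k1, k2, k3)) ` {(k, k2, k3). (k, k1, k2, k3) \<in> B}" using e by (rule rev_image_eqI)
  next
    fix q assume "q \<in> (\<lambda>(k, k2, k3). (k, k1, k2, k3)) ` {(k, k2, k3). (k, k1, k2, k3) \<in> B}"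
    then show "q \<in> {q \<in> B. co 1 q = k1}" by auto
  qed
  moreover have "inj_on (\<lambda>(k, k2, k3). (k, k1, k2, k3)) {(k, k2, k3). (k, k1, k2, k3) \<in> B}"
    by (auto simp: inj_on_def)
  ultimately show ?thesis by (simp add: card_image)
qed

lemma conv2: "card {(k, k1, k3). (k, k1, k2, k3) \<in> B} = card {q \<in> B. co 2 q = k2}"
proof -
  have "{q \<in> B. co 2 q = k2} = (\<lambda>(k, k1, k3). (k, k1, k2, k3)) ` {(k, k1, k3). (k, k1, k2, k3) \<in> B}"
  proof (intro equalityI subsetI)
    fix q assume q: "q \<in> {q \<in> B. co 2 q = k2}"
    have "k2 = co 2 q" using q by simp
    then have e: "q = (\<lambda>(k, k1, k3). (k, k1, k2, k3)) (co 0 q, co 1 q, co 3 q)" by (cases q) simp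
    have "(co 0 q, co 1 q, co 3 q) \<in> {(k, k1, k3). (k, k1, k2, k3) \<in> B}" using q e by (cases q) simp
    then show "q \<in> (\<lambda>(k, k1, k3). (k, k1, k2, k3)) ` {(k, k1, k3). (k, k1, k2, k3) \<in> B}" using e by (rule rev_image_eqI)
  next
    fix q assume "q \<in> (\<lambda>(k, k1, k3). (k, k1, k2, k3)) ` {(k, k1, k3). (k, k1, k2, k3) \<in> B}"
    then show "q \<in> {q \<in> B. co 2 q = k2}" by auto
  qed
  moreover have "inj_on (\<lambda>(k, k1, k3). (k, k1, k2, k3)) {(k, k1, k3). (k, k1, k2, k3) \<in> B}"
    by (auto simp: inj_on_def)
  ultimately show ?thesis by (simp add: card_image)
qed

lemma conv3: "card {(k, k1, k2). (k, k1, k2, k3) \<in> B} = card {q \<in> B. co 3 q = k3}"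
proof -
  have "{q \<in> B. co 3 q = k3} = (\<lambda>(k, k1, k2). (k, k1, k2, k3)) ` {(k, k1, k2). (k, k1, k2, k3) \<in> B}"
  proof (intro equalityI subsetI)
    fix q assume q: "q \<in> {q \<in> B. co 3 q = k3}"
    have "k3 = co 3 q" using q by simp
    then have e: "q = (\<lambda>(k, k1, k2). (k, k1, k2, k3)) (co 0 q, co 1 q, co 2 q)" by (cases q) simp
    have "(co 0 q, co 1 q, co 2 q) \<in> {(k, k1, k2). (k, k1, k2, k3) \<in> B}" using q e by (cases q) simp
    then show "q \<in> (\<lambda>(k, k1, k2). (k, k1, k2, k3)) ` {(k, k1, k2). (k, k1, k2, k3) \<in> B}" using e by (rule rev_image_eqI)
  next
    fix q assume "q \<in> (\<lambda>(k, k1, k2). (k, k1, k2, k3)) ` {(k, k1, k2). (k, k1, k2, k3) \<in> B}"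
    then show "q \<in> {q \<in> B. co 3 q = k3}" by auto
  qed
  moreover have "inj_on (\<lambda>(k, k1, k2). (k, k1, k2, k3)) {(k, k1, k2). (k, k1, k2, k3) \<in> B}"
    by (auto simp: inj_on_def)
  ultimately show ?thesis by (simp add: card_image)
qed



theorem lemma2p11:
  fixes \<alpha> C0 :: real
  assumes "1 < \<alpha>" and "\<alpha> < 2" and "0 < C0"
  shows "\<exists>C::real. \<forall>N N1 N2 N3 (m::real) (\<Gamma>::real) (j::nat).
     dyadic N \<and> dyadic N1 \<and> dyadic N2 \<and> dyadic N3 \<and>
     1 \<le> N1 \<and> N1 \<le> N \<and> 1 \<le> N2 \<and> N2 \<le> N \<and> 1 \<le> N3 \<and> N3 \<le> N \<and>
     0 < \<Gamma> \<and> j \<in> {1, 2, 3} \<and> sel3 j N1 N2 N3 = nmax3 N1 N2 N3 \<longrightarrow>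
     (let B = Bset \<alpha> C0 m N N1 N2 N3 j \<Gamma>; Nmin = real (nmin3 N1 N2 N3);
          Nmed = real (nmed3 N1 N2 N3) in
      real (card B) \<le> C * Nmin * Nmed \<and>
      (\<forall>k. real (card {(k1, k2, k3). (k, k1, k2, k3) \<in> B}) \<le> C * Nmed) \<and>
      (\<forall>k1. real (card {(k, k2, k3). (k, k1, k2, k3) \<in> B}) \<le> C * Nmed) \<and>
      (\<forall>k2. real (card {(k, k1, k3). (k, k1, k2, k3) \<in> B}) \<le> C * Nmed) \<and>
      (\<forall>k3. real (card {(k, k1, k2). (k, k1, k2, k3) \<in> B}) \<le> C * Nmed) \<and>
      (\<forall>k k2. real (card {(k1, k3). (k, k1, k2, k3) \<in> B}) \<le> C * Nmed) \<and>
      (\<forall>k1 k3. real (card {(k, k2). (k, k1, k2, k3) \<in> B}) \<le> C * Nmed))"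
proof -
  have a1: "1 < \<alpha>" and a2: "\<alpha> < 2" and C0p: "0 < C0" using assms by auto
  have C0: "0 \<le> C0" using C0p by simp
  define \<beta> where "\<beta> = \<alpha> - 1"
  have \<beta>: "0 < \<beta>" unfolding \<beta>_def using a1 by simp
  define lam where "lam = (2 * \<alpha>) powr (1 / \<beta>)"
  have lam0: "0 \<le> lam" unfolding lam_def by simp
  have lampow: "lam powr \<beta> = 2 * \<alpha>"
    unfolding lam_def powr_powr using \<beta> a1 by simp
  define K :: nat where "K = nat \<lceil>lam\<rceil> + 3"
  have lamK: "lam + 3 \<le> real K" unfolding K_def using lam0 by linarith
  have C1p: "0 \<le> C1 \<alpha> C0" unfolding C1_def using kap0_pos[OF a1] a1 C0 by simp
  define C2 where "C2 = max (C1 \<alpha> C0 * (real K + 2)) (4 * (4 * C0 + 2))"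
  have C2a: "C1 \<alpha> C0 * (real K + 2) \<le> C2" and C2b: "4 * (4 * C0 + 2) \<le> C2" unfolding C2_def by auto
  have C2p: "0 \<le> C2" by (rule order_trans[OF _ C2b]) (use C0 in simp)
  show ?thesis
  proof (rule exI[of _ "3 * C2 + 4"], intro allI impI)
    fix N N1 N2 N3 :: nat and m \<Gamma> :: real and j :: nat
    assume H: "dyadic N \<and> dyadic N1 \<and> dyadic N2 \<and> dyadic N3 \<and>
     1 \<le> N1 \<and> N1 \<le> N \<and> 1 \<le> N2 \<and> N2 \<le> N \<and> 1 \<le> N3 \<and> N3 \<le> N \<and>
     0 < \<Gamma> \<and> j \<in> {1, 2, 3} \<and> sel3 j N1 N2 N3 = nmax3 N1 N2 N3"
    then have N1: "1 \<le> N1" and N2: "1 \<le> N2" and N3: "1 \<le> N3" and j: "j \<in> {1, 2, 3}"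
      and jmax: "sel3 j N1 N2 N3 = nmax3 N1 N2 N3" and \<Gamma>: "0 < \<Gamma>" by auto
    define B where "B = Bset \<alpha> C0 m N N1 N2 N3 j \<Gamma>"
    define M where "M = nmed3 N1 N2 N3"
    have M1: "1 \<le> M" unfolding M_def using N1 N2 N3 by (rule med_ge1)
    have finB: "finite B" unfolding B_def by (rule finite_Bset)
    have BS: "q \<in> Sset \<alpha> C0 m N N1 N2 N3 \<and> real_of_int \<bar>co j q\<bar> \<le> \<Gamma> \<and> \<Gamma> < real_of_int \<bar>co 0 q\<bar>"
      if "q \<in> B" for q using Bset_D[OF _ j] that unfolding B_def by blast
    have sm: "\<forall>l\<in>{1, 2, 3}. l \<noteq> j \<longrightarrow> \<bar>co l q\<bar> \<le> int M" if "q \<in> B" for q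
      using small_bound[OF _ j jmax] BS[OF that] unfolding M_def by blast
    have kb: "\<bar>co 0 q\<bar> \<le> \<bar>co j q\<bar> + 2 * int M" if "q \<in> B" for q
      using k_bound[OF _ j sm[OF that]] BS[OF that] by blast
    have win: "\<Gamma> - 2 * real M < real_of_int \<bar>co j q\<bar>" if "q \<in> B" for q
    proof -
      have "real_of_int \<bar>co 0 q\<bar> \<le> real_of_int \<bar>co j q\<bar> + 2 * real M" using kb[OF that] by linarith
      then show ?thesis using BS[OF that] by linarith
    qed
    define W where "W = {z::int. \<Gamma> - 2 * real M < real_of_int \<bar>z\<bar> \<and> real_of_int \<bar>z\<bar> \<le> \<Gamma>}"
    have finW: "finite W" unfolding W_def by (rule finite_W)
    have cW: "card W \<le> 4 * M" unfolding W_def by (rule card_W)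
    have slice: "real (card {q \<in> B. co i q = v}) \<le> C2 * real M" if i: "i \<le> 3" for i v
    proof (cases "\<Gamma> < real K * real M")
      case True
      define R where "R = (K + 2) * M"
      have R1: "1 \<le> R" unfolding R_def using M1 by simp
      have "real (card {q \<in> B. co i q = v}) \<le> C1 \<alpha> C0 * real R"
      proof (rule bounded_slice[OF a1 a2 C0 R1 i])
        show "{q \<in> B. co i q = v} \<subseteq> {q \<in> Sset \<alpha> C0 m N N1 N2 N3. co i q = v \<and> \<bar>co 0 q\<bar> \<le> int R \<and>
           \<bar>co 1 q\<bar> \<le> int R \<and> \<bar>co 2 q\<bar> \<le> int R \<and> \<bar>co 3 q\<bar> \<le> int R}"
        proof
          fix q assume q: "q \<in> {q \<in> B. co i q = v}"
          then have qB: "q \<in> B" and qv: "co i q = v" by auto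
          have "real_of_int \<bar>co j q\<bar> < real K * real M" using BS[OF qB] True by linarith
          then have cj: "\<bar>co j q\<bar> \<le> int K * int M" by (metis of_int_less_iff of_int_of_nat_eq of_nat_mult order_less_imp_le)
          have RR: "int R = int K * int M + 2 * int M" unfolding R_def by (simp add: algebra_simps)
          have b: "\<bar>co l q\<bar> \<le> int R" if l: "l \<in> {1, 2, 3}" for l
          proof (cases "l = j")
            case True then show ?thesis using cj RR by simp
          next
            case False then have "\<bar>co l q\<bar> \<le> int M" using sm[OF qB] l by blast
            then show ?thesis using RR cj by linarith
          qed
          have b0: "\<bar>co 0 q\<bar> \<le> int R" using kb[OF qB] cj RR by linarith
          show "q \<in> {q \<in> Sset \<alpha> C0 m N N1 N2 N3. co i q = v \<and> \<bar>co 0 q\<bar> \<le> int R \<and>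
           \<bar>co 1 q\<bar> \<le> int R \<and> \<bar>co 2 q\<bar> \<le> int R \<and> \<bar>co 3 q\<bar> \<le> int R}"
            using BS[OF qB] qv b0 b[of 1] b[of 2] b[of 3] by simp
        qed
      qed
      also have "\<dots> = C1 \<alpha> C0 * (real K + 2) * real M" unfolding R_def by (simp add: algebra_simps)
      also have "\<dots> \<le> C2 * real M" using C2a by (intro mult_right_mono) auto
      finally show ?thesis .
    next
      case False
      define G where "G = \<Gamma> - 2 * real M"
      have KM: "real K * real M \<le> \<Gamma>" using False by simp
      have lk: "(lam + 3) * real M \<le> real K * real M" using lamK by (intro mult_right_mono) auto
      have le: "(lam + 3) * real M = lam * real M + 3 * real M" by (simp add: algebra_simps)
      have lm: "0 \<le> lam * real M" using lam0 by simp
      have GlM: "lam * real M \<le> G" unfolding G_def using KM lk le M1 by linarith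
      have Gpos: "0 < G" unfolding G_def using KM lk le lm M1 by linarith
      have GM: "2 * \<alpha> * real M powr (\<alpha> - 1) \<le> G powr (\<alpha> - 1)"
      proof -
        have "2 * \<alpha> * real M powr (\<alpha> - 1) = (lam * real M) powr (\<alpha> - 1)"
          using lampow lam0 unfolding \<beta>_def by (simp add: powr_mult)
        also have "\<dots> \<le> G powr (\<alpha> - 1)" using GlM lam0 a1 by (intro powr_mono2) auto
        finally show ?thesis .
      qed
      have "real (card {q \<in> B. co i q = v}) \<le> 4 * real M * (4 * C0 + 2)"
      proof (rule large_slice[where W=W and G=G and j=j and i=i and M=M])
        show "1 \<le> \<alpha>" using a1 by simp
        show "finite {q \<in> B. co i q = v}" using finB by simp
        show "{q \<in> B. co i q = v} \<subseteq> {q \<in> Sset \<alpha> C0 m N N1 N2 N3. co i q = v}" using BS by auto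
        show "\<forall>q\<in>{q \<in> B. co i q = v}. G \<le> real_of_int \<bar>co 0 q\<bar> \<and> G \<le> real_of_int \<bar>co j q\<bar> \<and> co j q \<in> W \<and>
            (\<forall>l\<in>{1, 2, 3}. l \<noteq> j \<longrightarrow> \<bar>co l q\<bar> \<le> int M)"
        proof
          fix q assume "q \<in> {q \<in> B. co i q = v}"
          then have qB: "q \<in> B" by simp
          show "G \<le> real_of_int \<bar>co 0 q\<bar> \<and> G \<le> real_of_int \<bar>co j q\<bar> \<and> co j q \<in> W \<and>
            (\<forall>l\<in>{1, 2, 3}. l \<noteq> j \<longrightarrow> \<bar>co l q\<bar> \<le> int M)"
            using BS[OF qB] win[OF qB] sm[OF qB] M1 unfolding G_def W_def by auto
        qed
      qed (use C0 M1 Gpos GM j i finW cW in auto)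
      also have "\<dots> \<le> C2 * real M" using C2b M1 by (simp add: mult_right_mono mult.commute mult.left_commute)
      finally show ?thesis .
    qed
    have C2M: "C2 * real M \<le> (3 * C2 + 4) * real M" using C2p by (intro mult_right_mono) auto
    have M3: "2 * real M + 1 \<le> (3 * C2 + 4) * real M"
    proof -
      have "2 * real M + 1 \<le> 4 * real M" using M1 by simp
      also have "\<dots> \<le> (3 * C2 + 4) * real M" using C2p by (intro mult_right_mono) auto
      finally show ?thesis .
    qed
    have M4: "4 * real M \<le> (3 * C2 + 4) * real M" using C2p by (intro mult_right_mono) auto
    have total: "real (card B) \<le> (3 * C2 + 4) * real (nmin3 N1 N2 N3) * real M"
    proof -
      obtain i where i: "i \<in> {1, 2, 3}" and imin: "sel3 i N1 N2 N3 = nmin3 N1 N2 N3" using min_exists by blast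
      define Nm where "Nm = nmin3 N1 N2 N3"
      have Nm1: "1 \<le> Nm" unfolding Nm_def using N1 N2 N3 by (rule min_ge1)
      have sub: "B \<subseteq> (\<Union>v\<in>{- int Nm..int Nm}. {q \<in> B. co i q = v})"
      proof
        fix q assume qB: "q \<in> B"
        have "\<bar>co i q\<bar> \<le> int Nm" using co_bound_sel[OF conjunct1[OF BS[OF qB]] i] imin unfolding Nm_def by simp
        then show "q \<in> (\<Union>v\<in>{- int Nm..int Nm}. {q \<in> B. co i q = v})" using qB by auto
      qed
      have "card B \<le> card (\<Union>v\<in>{- int Nm..int Nm}. {q \<in> B. co i q = v})"
        using sub finB by (intro card_mono) auto
      also have "\<dots> \<le> (\<Sum>v\<in>{- int Nm..int Nm}. card {q \<in> B. co i q = v})" by (intro card_UN_le) simp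
      finally have "real (card B) \<le> real (\<Sum>v\<in>{- int Nm..int Nm}. card {q \<in> B. co i q = v})"
        by (simp only: of_nat_le_iff)
      also have "\<dots> = (\<Sum>v\<in>{- int Nm..int Nm}. real (card {q \<in> B. co i q = v}))"
        by (rule of_nat_sum)
      also have "\<dots> \<le> (\<Sum>v\<in>{- int Nm..int Nm}. C2 * real M)"
        using i by (intro sum_mono slice) auto
      also have "\<dots> = real (2 * Nm + 1) * (C2 * real M)" by simp
      also have "\<dots> \<le> real (3 * Nm) * (C2 * real M)" using Nm1 C2p by (intro mult_right_mono) auto
      also have "\<dots> = 3 * C2 * real Nm * real M" by simp
      also have "\<dots> \<le> (3 * C2 + 4) * real Nm * real M" using Nm1 by (intro mult_right_mono) auto
      finally show ?thesis unfolding Nm_def .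
    qed
    have sc: "real (card {(k1, k3). (k, k1, k2, k3) \<in> B}) \<le> (3 * C2 + 4) * real M" for k k2
    proof -
      define S where "S = {(k1, k3). (k, k1, k2, k3) \<in> B}"
      have mem: "k = a - k2 + b \<and> \<bar>a\<bar> \<le> int N1 \<and> \<bar>b\<bar> \<le> int N3" if "(a, b) \<in> S" for a b
        using SsetD[OF conjunct1[OF BS]] that unfolding S_def by fastforce
      have finS: "finite S"
        by (rule finite_subset[of _ "{- int N1..int N1} \<times> {- int N3..int N3}"]) (auto dest!: mem)
      have c1: "card S \<le> 2 * N1 + 1"
      proof -
        have "inj_on fst S"
        proof (rule inj_onI)
          fix x y assume x: "x \<in> S" and y: "y \<in> S" and e: "fst x = fst y"
          obtain a b where xx: "x = (a, b)" by (cases x)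
          obtain a' b' where yy: "y = (a', b')" by (cases y)
          show "x = y" using mem[of a b] mem[of a' b'] x y e unfolding xx yy by auto
        qed
        then have "card S = card (fst ` S)" by (simp add: card_image)
        also have "\<dots> \<le> card {- int N1..int N1}" by (intro card_mono) (auto dest!: mem)
        finally show ?thesis by simp
      qed
      have c3: "card S \<le> 2 * N3 + 1"
      proof -
        have "inj_on snd S"
        proof (rule inj_onI)
          fix x y assume x: "x \<in> S" and y: "y \<in> S" and e: "snd x = snd y"
          obtain a b where xx: "x = (a, b)" by (cases x)
          obtain a' b' where yy: "y = (a', b')" by (cases y)
          show "x = y" using mem[of a b] mem[of a' b'] x y e unfolding xx yy by auto
        qed
        then have "card S = card (snd ` S)" by (simp add: card_image)
        also have "\<dots> \<le> card {- int N3..int N3}" by (intro card_mono) (auto dest!: mem)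
        finally show ?thesis by simp
      qed
      have "card S \<le> 2 * min N1 N3 + 1" using c1 c3 by (simp add: min_def)
      also have "\<dots> \<le> 2 * M + 1" using min13_med[of N1 N3 N2] unfolding M_def by simp
      finally have "real (card S) \<le> 2 * real M + 1" by linarith
      then show ?thesis unfolding S_def using M3 by linarith
    qed
    have sd: "real (card {(k, k2). (k, k1, k2, k3) \<in> B}) \<le> (3 * C2 + 4) * real M" for k1 k3
    proof -
      define S where "S = {(k, k2). (k, k1, k2, k3) \<in> B}"
      have mem: "a = k1 - b + k3 \<and> \<bar>b\<bar> \<le> int N2" if "(a, b) \<in> S" for a b
        using SsetD[OF conjunct1[OF BS]] that unfolding S_def by fastforce
      have inj: "inj_on snd S"
        proof (rule inj_onI)
          fix x y assume x: "x \<in> S" and y: "y \<in> S" and e: "snd x = snd y"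
          obtain a b where xx: "x = (a, b)" by (cases x)
          obtain a' b' where yy: "y = (a', b')" by (cases y)
          show "x = y" using mem[of a b] mem[of a' b'] x y e unfolding xx yy by auto
        qed
      have "card S \<le> 4 * M"
      proof (cases "j = 2")
        case True
        have "snd ` S \<subseteq> W"
        proof
          fix z assume "z \<in> snd ` S"
          then obtain a where aS: "(a, z) \<in> S" by auto
          then have qB: "(a, k1, z, k3) \<in> B" unfolding S_def by simp
          show "z \<in> W" using BS[OF qB] win[OF qB] True unfolding W_def by simp
        qed
        then have "card (snd ` S) \<le> card W" using finW by (intro card_mono)
        then show ?thesis using cW inj by (simp add: card_image)
      next
        case False
        have N2M: "N2 \<le> M" using med_bound[OF j jmax, of 2] False unfolding M_def by (simp add: sel3_def)
        have "card (snd ` S) \<le> card {- int N2..int N2}" by (intro card_mono) (auto dest!: mem)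
        then have "card S \<le> 2 * N2 + 1" using inj by (simp add: card_image)
        then show ?thesis using N2M M1 by linarith
      qed
      then have "real (card S) \<le> 4 * real M" by linarith
      then show ?thesis unfolding S_def using M4 by linarith
    qed
    show "let B = Bset \<alpha> C0 m N N1 N2 N3 j \<Gamma>; Nmin = real (nmin3 N1 N2 N3); Nmed = real (nmed3 N1 N2 N3) in
      real (card B) \<le> (3 * C2 + 4) * Nmin * Nmed \<and>
      (\<forall>k. real (card {(k1, k2, k3). (k, k1, k2, k3) \<in> B}) \<le> (3 * C2 + 4) * Nmed) \<and>
      (\<forall>k1. real (card {(k, k2, k3). (k, k1, k2, k3) \<in> B}) \<le> (3 * C2 + 4) * Nmed) \<and>
      (\<forall>k2. real (card {(k, k1, k3). (k, k1, k2, k3) \<in> B}) \<le> (3 * C2 + 4) * Nmed) \<and>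
      (\<forall>k3. real (card {(k, k1, k2). (k, k1, k2, k3) \<in> B}) \<le> (3 * C2 + 4) * Nmed) \<and>
      (\<forall>k k2. real (card {(k1, k3). (k, k1, k2, k3) \<in> B}) \<le> (3 * C2 + 4) * Nmed) \<and>
      (\<forall>k1 k3. real (card {(k, k2). (k, k1, k2, k3) \<in> B}) \<le> (3 * C2 + 4) * Nmed)"
      unfolding Let_def B_def[symmetric] M_def[symmetric]
    proof (intro conjI allI)
      show "real (card B) \<le> (3 * C2 + 4) * real (nmin3 N1 N2 N3) * real M" by (rule total)
      show "real (card {(k1, k2, k3). (k, k1, k2, k3) \<in> B}) \<le> (3 * C2 + 4) * real M" for k
        unfolding conv0 using slice[of 0 k] C2M by simp
      show "real (card {(k, k2, k3). (k, k1, k2, k3) \<in> B}) \<le> (3 * C2 + 4) * real M" for k1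
        unfolding conv1 using slice[of 1 k1] C2M by simp
      show "real (card {(k, k1, k3). (k, k1, k2, k3) \<in> B}) \<le> (3 * C2 + 4) * real M" for k2
        unfolding conv2 using slice[of 2 k2] C2M by simp
      show "real (card {(k, k1, k2). (k, k1, k2, k3) \<in> B}) \<le> (3 * C2 + 4) * real M" for k3
        unfolding conv3 using slice[of 3 k3] C2M by simp
      show "real (card {(k1, k3). (k, k1, k2, k3) \<in> B}) \<le> (3 * C2 + 4) * real M" for k k2 by (rule sc)
      show "real (card {(k, k2). (k, k1, k2, k3) \<in> B}) \<le> (3 * C2 + 4) * real M" for k1 k3 by (rule sd)
    qed
  qed
qed


end
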